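(* Let $f:G\to H$ be a surjective group homomorphism with kernel $K$, and let $L\subset K$ be a subset whose normal closure in $G$ is $K$. Then $\ker\big(f^\#:\kappa G^\#\to\kappa H^\#\big)=L^\#$.
   Context: Let $\kappa$ be a field of characteristic $0$. For a group $G$, let $*:\kappa G\to\kappa G$ be the $\kappa$-linear map with $g^*=g^{-1}$ for $g\in G$, and $(\kappa G)^*$ its fixed points. $A_G$ is the quotient of $\kappa G$ by the two-sided ideal generated by all $ab-ba$ with $a\in\kappa G$, $b\in(\kappa G)^*$; $*$ descends to $A_G$, and $\kappa G^\#=\{x\in A_G:x^*=x\}$ (a commutative subring of the centre of $A_G$). Group elements are identified with their images in $A_G$, and $\bar x=\tfrac12(x+x^* )$ for $x\in A_G$. A group homomorphism $f:G\to H$ induces a ring homomorphism $A_G\to A_H$ commuting with $*$; $f^\#$ is its restriction to $\kappa G^\#\to\kappa H^\#$. For a subset $L\subset G$, $L^\#$ is the ideal of $\kappa G^\#$ generated by $\{\overline{xl}-\bar x : x\in A_G,\ l\in L\}$ (equivalently, by $\{\overline{bl}-\bar b: b\in B, l\in L\}$ for any generating set $B$ of $A_G$ as a $\kappa G^\#$-module). *)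

theory Defs
  imports "HOL-Algebra.Algebra"
begin

definition normal_closure :: "('g, 'm) monoid_scheme \<Rightarrow> 'g set \<Rightarrow> 'g set" where
  "normal_closure G L = \<Inter>{N. N \<lhd> G \<and> L \<subseteq> N}"

section \<open>The group algebra \<kappa>G (finitely supported functions G \<rightarrow> \<kappa>)\<close>

definition fsupp :: "('g \<Rightarrow> 'k::zero) \<Rightarrow> 'g set" where
  "fsupp a = {g. a g \<noteq> 0}"

definition grp_alg :: "('g, 'm) monoid_scheme \<Rightarrow> ('g \<Rightarrow> 'k::field) ring" where
  "grp_alg G =
    \<lparr>carrier = {a. finite (fsupp a) \<and> fsupp a \<subseteq> carrier G},
     Group.monoid.mult = (\<lambda>a b g. if g \<in> carrier G
                     then (\<Sum>h\<in>fsupp a. a h * b (inv\<^bsub>G\<^esub> h \<otimes>\<^bsub>G\<^esub> g)) else 0),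
     Group.monoid.one = (\<lambda>g. if g = \<one>\<^bsub>G\<^esub> then 1 else 0),
     Ring.ring.zero = (\<lambda>g. 0),
     Ring.ring.add = (\<lambda>a b g. a g + b g)\<rparr>"

definition grp_elt :: "'g \<Rightarrow> ('g \<Rightarrow> 'k::field)" where
  "grp_elt g = (\<lambda>h. if h = g then 1 else 0)"

definition grp_star :: "('g, 'm) monoid_scheme \<Rightarrow> ('g \<Rightarrow> 'k::field) \<Rightarrow> ('g \<Rightarrow> 'k)" where
  "grp_star G a = (\<lambda>g. if g \<in> carrier G then a (inv\<^bsub>G\<^esub> g) else 0)"

definition grp_alg_map ::
  "('g \<Rightarrow> 'h) \<Rightarrow> ('h, 'n) monoid_scheme \<Rightarrow> ('g \<Rightarrow> 'k::field) \<Rightarrow> ('h \<Rightarrow> 'k)" where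
  "grp_alg_map f H a = (\<lambda>h. if h \<in> carrier H then (\<Sum>g\<in>{g\<in>fsupp a. f g = h}. a g) else 0)"

definition comm_ideal :: "('g, 'm) monoid_scheme \<Rightarrow> ('g \<Rightarrow> 'k::field) set" where
  "comm_ideal G = genideal (grp_alg G)
     {(a \<otimes>\<^bsub>grp_alg G\<^esub> b) \<ominus>\<^bsub>grp_alg G\<^esub> (b \<otimes>\<^bsub>grp_alg G\<^esub> a) | a b.
        a \<in> carrier (grp_alg G) \<and> b \<in> carrier (grp_alg G) \<and> grp_star G b = b}"

definition A_alg :: "('g, 'm) monoid_scheme \<Rightarrow> ('g \<Rightarrow> 'k::field) set ring" where
  "A_alg G = grp_alg G Quot comm_ideal G"

definition A_cls :: "('g, 'm) monoid_scheme \<Rightarrow> ('g \<Rightarrow> 'k::field) \<Rightarrow> ('g \<Rightarrow> 'k) set" where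
  "A_cls G x = a_r_coset (grp_alg G) (comm_ideal G) x"

definition A_star :: "('g, 'm) monoid_scheme \<Rightarrow> ('g \<Rightarrow> 'k::field) set \<Rightarrow> ('g \<Rightarrow> 'k) set" where
  "A_star G U = A_cls G (grp_star G (SOME x. x \<in> U))"

definition A_bar :: "('g, 'm) monoid_scheme \<Rightarrow> ('g \<Rightarrow> 'k::field) set \<Rightarrow> ('g \<Rightarrow> 'k) set" where
  "A_bar G U = (let x = (SOME x. x \<in> U) in
                 A_cls G (\<lambda>g. (x g + grp_star G x g) / 2))"

definition sharp :: "('g, 'm) monoid_scheme \<Rightarrow> ('g \<Rightarrow> 'k::field) set set" where
  "sharp G = {U \<in> carrier (A_alg G). A_star G U = U}"

definition sharp_ring :: "('g, 'm) monoid_scheme \<Rightarrow> ('g \<Rightarrow> 'k::field) set ring" where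
  "sharp_ring G = (A_alg G)\<lparr>carrier := sharp G\<rparr>"

definition A_map :: "('g \<Rightarrow> 'h) \<Rightarrow> ('g, 'm) monoid_scheme \<Rightarrow> ('h, 'n) monoid_scheme
    \<Rightarrow> ('g \<Rightarrow> 'k::field) set \<Rightarrow> ('h \<Rightarrow> 'k) set" where
  "A_map f G H U = A_cls H (grp_alg_map f H (SOME x. x \<in> U))"

definition sharp_kernel :: "('g \<Rightarrow> 'h) \<Rightarrow> ('g, 'm) monoid_scheme \<Rightarrow> ('h, 'n) monoid_scheme
    \<Rightarrow> ('g \<Rightarrow> 'k::field) set set" where
  "sharp_kernel f G H =
     {U \<in> sharp G. (A_map f G H U :: ('h \<Rightarrow> 'k) set) = \<zero>\<^bsub>A_alg H\<^esub>}"

definition sharp_ideal :: "('g, 'm) monoid_scheme \<Rightarrow> 'g set \<Rightarrow> ('g \<Rightarrow> 'k::field) set set" where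
  "sharp_ideal G L = genideal (sharp_ring G)
     {A_bar G (U \<otimes>\<^bsub>A_alg G\<^esub> A_cls G (grp_elt l)) \<ominus>\<^bsub>A_alg G\<^esub> A_bar G U | U l.
        U \<in> carrier (A_alg G) \<and> l \<in> L}"

end

theory Submission
  imports Defs
begin

lemma ga_carrier: "carrier (grp_alg G) = {a. finite (fsupp a) \<and> fsupp a \<subseteq> carrier G}"
  by (simp add: grp_alg_def)
lemma ga_add: "a \<oplus>\<^bsub>grp_alg G\<^esub> b = (\<lambda>g. a g + b g)"
  by (simp add: grp_alg_def)
lemma ga_zero: "\<zero>\<^bsub>grp_alg G\<^esub> = (\<lambda>g. 0)"
  by (simp add: grp_alg_def)
lemma ga_one: "\<one>\<^bsub>grp_alg G\<^esub> = grp_elt \<one>\<^bsub>G\<^esub>"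
  by (simp add: grp_alg_def grp_elt_def)
lemma ga_mult: "a \<otimes>\<^bsub>grp_alg G\<^esub> b = (\<lambda>g. if g \<in> carrier G
                     then (\<Sum>h\<in>fsupp a. a h * b (inv\<^bsub>G\<^esub> h \<otimes>\<^bsub>G\<^esub> g)) else 0)"
  by (simp add: grp_alg_def)

lemma ga_add_apply: "(a \<oplus>\<^bsub>grp_alg G\<^esub> b) g = a g + b g"
  by (simp add: grp_alg_def)

lemma fsupp_iff: "x \<in> fsupp a \<longleftrightarrow> a x \<noteq> 0" by (simp add: fsupp_def)

lemma ga_out: "a \<in> carrier (grp_alg G) \<Longrightarrow> g \<notin> carrier G \<Longrightarrow> a g = 0"
  by (auto simp: ga_carrier fsupp_def)

lemma ga_memI: "finite S \<Longrightarrow> S \<subseteq> carrier G \<Longrightarrow> (\<And>g. g \<notin> S \<Longrightarrow> a g = 0) \<Longrightarrow> a \<in> carrier (grp_alg G)"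
  unfolding ga_carrier fsupp_def by (auto intro: finite_subset)

lemma ga_eqI: "a \<in> carrier (grp_alg G) \<Longrightarrow> b \<in> carrier (grp_alg G) \<Longrightarrow> (\<And>g. g \<in> carrier G \<Longrightarrow> a g = b g) \<Longrightarrow> a = b"
  by (rule ext) (metis ga_out)

context fixes G :: "('g,'m) monoid_scheme" (structure) assumes grp: "group G"
begin

interpretation group G by (rule grp)

lemma gc1 [simp]: "x \<in> carrier G \<Longrightarrow> y \<in> carrier G \<Longrightarrow> x \<otimes> (inv x \<otimes> y) = y"
  by (simp add: m_assoc[symmetric])
lemma gc2 [simp]: "x \<in> carrier G \<Longrightarrow> y \<in> carrier G \<Longrightarrow> inv x \<otimes> (x \<otimes> y) = y"
  by (simp add: m_assoc[symmetric])

lemma mult_apply: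
  assumes a: "a \<in> carrier (grp_alg G)" and g: "g \<in> carrier G" and S: "finite S" "fsupp a \<subseteq> S"
  shows "(a \<otimes>\<^bsub>grp_alg G\<^esub> b) g = (\<Sum>h\<in>S. a h * b (inv h \<otimes> g))"
  unfolding ga_mult using g S by (auto intro!: sum.mono_neutral_left simp: fsupp_def)

lemma mult_apply2:
  assumes a: "a \<in> carrier (grp_alg G)" and b: "b \<in> carrier (grp_alg G)" and g: "g \<in> carrier G"
    and T: "finite T" "fsupp b \<subseteq> T" "T \<subseteq> carrier G"
  shows "(a \<otimes>\<^bsub>grp_alg G\<^esub> b) g = (\<Sum>k\<in>T. a (g \<otimes> inv k) * b k)"
proof -
  let ?S = "(\<lambda>k. g \<otimes> inv k) ` T \<union> fsupp a"
  have fa: "finite (fsupp a)" using a by (simp add: ga_carrier)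
  have "(a \<otimes>\<^bsub>grp_alg G\<^esub> b) g = (\<Sum>h\<in>?S. a h * b (inv h \<otimes> g))"
    by (rule mult_apply[OF a g]) (use T fa in auto)
  also have "\<dots> = (\<Sum>h\<in>(\<lambda>k. g \<otimes> inv k) ` T. a h * b (inv h \<otimes> g))"
  proof (rule sum.mono_neutral_right)
    show "\<forall>i\<in>?S - (\<lambda>k. g \<otimes> inv k) ` T. a i * b (inv i \<otimes> g) = 0"
    proof
      fix i assume i: "i \<in> ?S - (\<lambda>k. g \<otimes> inv k) ` T"
      show "a i * b (inv i \<otimes> g) = 0"
      proof (cases "a i = 0")
        case False
        hence ic: "i \<in> carrier G" using a by (auto simp: ga_carrier fsupp_def)
        have "inv i \<otimes> g \<notin> T"
        proof
          assume "inv i \<otimes> g \<in> T"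
          moreover have "g \<otimes> inv (inv i \<otimes> g) = i" using ic g
            by (simp add: inv_mult_group m_assoc)
          ultimately show False using i by (metis DiffD2 image_eqI)
        qed
        hence "b (inv i \<otimes> g) = 0" using T by (auto simp: fsupp_def)
        thus ?thesis by simp
      qed simp
    qed
  qed (use T fa in auto)
  also have "\<dots> = (\<Sum>k\<in>T. a (g \<otimes> inv k) * b (inv (g \<otimes> inv k) \<otimes> g))"
  proof -
    have "inj_on (\<lambda>k. g \<otimes> inv k) T"
      by (rule inj_onI) (metis T(3) g inv_closed inv_inv l_cancel subsetD)
    thus ?thesis by (simp add: sum.reindex)
  qed
  also have "\<dots> = (\<Sum>k\<in>T. a (g \<otimes> inv k) * b k)"
    by (rule sum.cong) (use T g in \<open>auto simp: inv_mult_group m_assoc\<close>)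
  finally show ?thesis .
qed

lemma mult_closed:
  assumes a: "a \<in> carrier (grp_alg G)" and b: "b \<in> carrier (grp_alg G)"
  shows "a \<otimes>\<^bsub>grp_alg G\<^esub> b \<in> carrier (grp_alg G)"
proof (rule ga_memI)
  let ?S = "(\<lambda>(x,y). x \<otimes> y) ` (fsupp a \<times> fsupp b)"
  have fa: "finite (fsupp a)" "fsupp a \<subseteq> carrier G" using a by (auto simp: ga_carrier)
  have fb: "finite (fsupp b)" "fsupp b \<subseteq> carrier G" using b by (auto simp: ga_carrier)
  show "finite ?S" using fa fb by auto
  show "?S \<subseteq> carrier G" using fa fb by auto
  fix g assume g: "g \<notin> ?S"
  show "(a \<otimes>\<^bsub>grp_alg G\<^esub> b) g = 0"
  proof (cases "g \<in> carrier G")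
    case True
    have "\<forall>h\<in>fsupp a. a h * b (inv h \<otimes> g) = 0"
    proof
      fix h assume h: "h \<in> fsupp a"
      have hc: "h \<in> carrier G" using h fa by auto
      have "inv h \<otimes> g \<notin> fsupp b"
      proof
        assume "inv h \<otimes> g \<in> fsupp b"
        hence "h \<otimes> (inv h \<otimes> g) \<in> ?S" using h by force
        thus False using g hc True by simp
      qed
      thus "a h * b (inv h \<otimes> g) = 0" by (simp add: fsupp_def)
    qed
    thus ?thesis using True by (auto simp: ga_mult intro!: sum.neutral)
  qed (simp add: ga_mult)
qed

lemma add_closed:
  assumes a: "a \<in> carrier (grp_alg G)" and b: "b \<in> carrier (grp_alg G)"
  shows "a \<oplus>\<^bsub>grp_alg G\<^esub> b \<in> carrier (grp_alg G)"
  apply (rule ga_memI[of "fsupp a \<union> fsupp b"])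
  using a b by (auto simp: ga_carrier ga_add fsupp_def)

lemma mult_assoc:
  assumes a: "a \<in> carrier (grp_alg G)" and b: "b \<in> carrier (grp_alg G)" and c: "c \<in> carrier (grp_alg G)"
  shows "(a \<otimes>\<^bsub>grp_alg G\<^esub> b) \<otimes>\<^bsub>grp_alg G\<^esub> c = a \<otimes>\<^bsub>grp_alg G\<^esub> (b \<otimes>\<^bsub>grp_alg G\<^esub> c)"
proof (rule ga_eqI)
  show "(a \<otimes>\<^bsub>grp_alg G\<^esub> b) \<otimes>\<^bsub>grp_alg G\<^esub> c \<in> carrier (grp_alg G)"
    using a b c by (simp add: mult_closed)
  show "a \<otimes>\<^bsub>grp_alg G\<^esub> (b \<otimes>\<^bsub>grp_alg G\<^esub> c) \<in> carrier (grp_alg G)"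
    using a b c by (simp add: mult_closed)
  fix g assume g: "g \<in> carrier G"
  have fa: "finite (fsupp a)" "fsupp a \<subseteq> carrier G" using a by (auto simp: ga_carrier)
  have fc: "finite (fsupp c)" "fsupp c \<subseteq> carrier G" using c by (auto simp: ga_carrier)
  have "((a \<otimes>\<^bsub>grp_alg G\<^esub> b) \<otimes>\<^bsub>grp_alg G\<^esub> c) g
      = (\<Sum>m\<in>fsupp c. (a \<otimes>\<^bsub>grp_alg G\<^esub> b) (g \<otimes> inv m) * c m)"
    by (rule mult_apply2) (use a b c g fc mult_closed in auto)
  also have "\<dots> = (\<Sum>m\<in>fsupp c. (\<Sum>k\<in>fsupp a. a k * b (inv k \<otimes> (g \<otimes> inv m))) * c m)"
    by (rule sum.cong[OF refl], subst mult_apply[OF a _ fa(1)]) (use g fc in auto)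
  also have "\<dots> = (\<Sum>m\<in>fsupp c. \<Sum>k\<in>fsupp a. a k * (b (inv k \<otimes> (g \<otimes> inv m)) * c m))"
    by (simp add: sum_distrib_right mult.assoc)
  also have "\<dots> = (\<Sum>k\<in>fsupp a. a k * (\<Sum>m\<in>fsupp c. b (inv k \<otimes> (g \<otimes> inv m)) * c m))"
    by (subst sum.swap) (simp add: sum_distrib_left)
  also have "\<dots> = (\<Sum>k\<in>fsupp a. a k * (b \<otimes>\<^bsub>grp_alg G\<^esub> c) (inv k \<otimes> g))"
  proof (rule sum.cong[OF refl])
    fix k assume k: "k \<in> fsupp a"
    hence kc: "k \<in> carrier G" using fa by auto
    show "a k * (\<Sum>m\<in>fsupp c. b (inv k \<otimes> (g \<otimes> inv m)) * c m) = a k * (b \<otimes>\<^bsub>grp_alg G\<^esub> c) (inv k \<otimes> g)"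
    proof -
      have "(b \<otimes>\<^bsub>grp_alg G\<^esub> c) (inv k \<otimes> g) = (\<Sum>m\<in>fsupp c. b (inv k \<otimes> g \<otimes> inv m) * c m)"
        by (rule mult_apply2[OF b c _ fc(1) _ fc(2)]) (use g kc in auto)
      also have "\<dots> = (\<Sum>m\<in>fsupp c. b (inv k \<otimes> (g \<otimes> inv m)) * c m)"
      proof (rule sum.cong[OF refl])
        fix m assume "m \<in> fsupp c"
        hence "m \<in> carrier G" using fc by auto
        thus "b (inv k \<otimes> g \<otimes> inv m) * c m = b (inv k \<otimes> (g \<otimes> inv m)) * c m"
          using g kc by (simp add: m_assoc)
      qed
      finally show ?thesis by simp
    qed
  qed
  also have "\<dots> = (a \<otimes>\<^bsub>grp_alg G\<^esub> (b \<otimes>\<^bsub>grp_alg G\<^esub> c)) g"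
    by (rule mult_apply[OF a g fa(1), symmetric]) simp
  finally show "((a \<otimes>\<^bsub>grp_alg G\<^esub> b) \<otimes>\<^bsub>grp_alg G\<^esub> c) g = (a \<otimes>\<^bsub>grp_alg G\<^esub> (b \<otimes>\<^bsub>grp_alg G\<^esub> c)) g" .
qed

lemma elt_closed: "g \<in> carrier G \<Longrightarrow> grp_elt g \<in> carrier (grp_alg G)"
  by (rule ga_memI[of "{g}"]) (auto simp: grp_elt_def)

lemma fsupp_elt: "fsupp (grp_elt g :: 'g \<Rightarrow> 'k::field) = {g}"
  by (auto simp: fsupp_def grp_elt_def)

lemma l_elt:
  assumes g: "g \<in> carrier G" and b: "b \<in> carrier (grp_alg G)" and x: "x \<in> carrier G"
  shows "(grp_elt g \<otimes>\<^bsub>grp_alg G\<^esub> b) x = b (inv g \<otimes> x)"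
  by (subst mult_apply[OF elt_closed[OF g] x, of "{g}"]) (auto simp: fsupp_def grp_elt_def)

lemma r_elt:
  assumes g: "g \<in> carrier G" and a: "a \<in> carrier (grp_alg G)" and x: "x \<in> carrier G"
  shows "(a \<otimes>\<^bsub>grp_alg G\<^esub> grp_elt g) x = a (x \<otimes> inv g)"
  by (subst mult_apply2[OF a elt_closed[OF g] x, of "{g}"]) (auto simp: fsupp_def grp_elt_def g)

lemma inv_mult_eq: "g \<in> carrier G \<Longrightarrow> x \<in> carrier G \<Longrightarrow> h \<in> carrier G \<Longrightarrow> (inv g \<otimes> x = h) = (x = g \<otimes> h)"
proof
  assume g: "g \<in> carrier G" and x: "x \<in> carrier G" and "inv g \<otimes> x = h"
  hence "g \<otimes> (inv g \<otimes> x) = g \<otimes> h" by simp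
  thus "x = g \<otimes> h" using g x by simp
next
  assume g: "g \<in> carrier G" and h: "h \<in> carrier G" and "x = g \<otimes> h"
  thus "inv g \<otimes> x = h" by simp
qed

lemma elt_mult: "g \<in> carrier G \<Longrightarrow> h \<in> carrier G \<Longrightarrow>
   grp_elt g \<otimes>\<^bsub>grp_alg G\<^esub> grp_elt h = (grp_elt (g \<otimes> h) :: 'g \<Rightarrow> 'k::field)"
  apply (rule ga_eqI[where G=G])
    apply (simp add: elt_closed mult_closed)
   apply (simp add: elt_closed)
  by (simp add: l_elt elt_closed, simp add: grp_elt_def inv_mult_eq)

lemma ring_ga: "ring (grp_alg G :: ('g \<Rightarrow> 'k::field) ring)"
proof (rule ringI)
  show "abelian_group (grp_alg G :: ('g \<Rightarrow> 'k::field) ring)"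
  proof (rule abelian_groupI)
    fix x assume x: "x \<in> carrier (grp_alg G :: ('g \<Rightarrow> 'k::field) ring)"
    show "\<exists>y\<in>carrier (grp_alg G). y \<oplus>\<^bsub>grp_alg G\<^esub> x = \<zero>\<^bsub>grp_alg G\<^esub>"
      by (rule bexI[of _ "\<lambda>g. - x g"]) (use x in \<open>auto simp: ga_carrier ga_add ga_zero fsupp_def\<close>)
  next
    show "\<zero>\<^bsub>grp_alg G\<^esub> \<in> carrier (grp_alg G :: ('g \<Rightarrow> 'k::field) ring)"
      by (rule ga_memI[of "{}"]) (auto simp: ga_zero)
  qed (auto simp: ga_add ga_zero add.assoc add.commute add_closed[unfolded ga_add])
  show "monoid (grp_alg G :: ('g \<Rightarrow> 'k::field) ring)"
  proof (rule monoidI)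
    fix x assume x: "x \<in> carrier (grp_alg G :: ('g \<Rightarrow> 'k::field) ring)"
    show "\<one>\<^bsub>grp_alg G\<^esub> \<otimes>\<^bsub>grp_alg G\<^esub> x = x"
      by (rule ga_eqI) (use x in \<open>auto simp: ga_one mult_closed elt_closed l_elt\<close>)
    show "x \<otimes>\<^bsub>grp_alg G\<^esub> \<one>\<^bsub>grp_alg G\<^esub> = x"
      by (rule ga_eqI) (use x in \<open>auto simp: ga_one mult_closed elt_closed r_elt\<close>)
  qed (auto simp: mult_closed mult_assoc ga_one elt_closed)
next
  fix x y z assume x: "x \<in> carrier (grp_alg G :: ('g \<Rightarrow> 'k::field) ring)"
    and y: "y \<in> carrier (grp_alg G :: ('g \<Rightarrow> 'k::field) ring)"
    and z: "z \<in> carrier (grp_alg G :: ('g \<Rightarrow> 'k::field) ring)"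
  have fx: "finite (fsupp x)" "fsupp x \<subseteq> carrier G" using x by (auto simp: ga_carrier)
  have fy: "finite (fsupp y)" "fsupp y \<subseteq> carrier G" using y by (auto simp: ga_carrier)
  have fz: "finite (fsupp z)" "fsupp z \<subseteq> carrier G" using z by (auto simp: ga_carrier)
  show "(x \<oplus>\<^bsub>grp_alg G\<^esub> y) \<otimes>\<^bsub>grp_alg G\<^esub> z = x \<otimes>\<^bsub>grp_alg G\<^esub> z \<oplus>\<^bsub>grp_alg G\<^esub> y \<otimes>\<^bsub>grp_alg G\<^esub> z"
  proof (rule ga_eqI)
    fix g assume g: "g \<in> carrier G"
    show "((x \<oplus>\<^bsub>grp_alg G\<^esub> y) \<otimes>\<^bsub>grp_alg G\<^esub> z) g = (x \<otimes>\<^bsub>grp_alg G\<^esub> z \<oplus>\<^bsub>grp_alg G\<^esub> y \<otimes>\<^bsub>grp_alg G\<^esub> z) g"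
      apply (subst mult_apply2[OF add_closed[OF x y] z g fz(1) order.refl fz(2)])
      apply (simp only: ga_add_apply)
      apply (subst mult_apply2[OF x z g fz(1) order.refl fz(2)])
      apply (subst mult_apply2[OF y z g fz(1) order.refl fz(2)])
      by (simp add: sum.distrib distrib_right)
  qed (use x y z in \<open>auto simp: add_closed mult_closed\<close>)
  show "z \<otimes>\<^bsub>grp_alg G\<^esub> (x \<oplus>\<^bsub>grp_alg G\<^esub> y) = z \<otimes>\<^bsub>grp_alg G\<^esub> x \<oplus>\<^bsub>grp_alg G\<^esub> z \<otimes>\<^bsub>grp_alg G\<^esub> y"
  proof (rule ga_eqI)
    fix g assume g: "g \<in> carrier G"
    show "(z \<otimes>\<^bsub>grp_alg G\<^esub> (x \<oplus>\<^bsub>grp_alg G\<^esub> y)) g = (z \<otimes>\<^bsub>grp_alg G\<^esub> x \<oplus>\<^bsub>grp_alg G\<^esub> z \<otimes>\<^bsub>grp_alg G\<^esub> y) g"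
      apply (subst mult_apply[OF z g fz(1) order.refl])
      apply (simp only: ga_add_apply)
      apply (subst mult_apply[OF z g fz(1) order.refl])
      apply (subst mult_apply[OF z g fz(1) order.refl])
      by (simp add: ga_add_apply sum.distrib distrib_left)
  qed (use x y z in \<open>auto simp: add_closed mult_closed\<close>)
qed

end

definition sc :: "'k::field \<Rightarrow> ('g \<Rightarrow> 'k) \<Rightarrow> ('g \<Rightarrow> 'k)" where
  "sc c a = (\<lambda>g. c * a g)"

definition gsym :: "('g, 'm) monoid_scheme \<Rightarrow> ('g \<Rightarrow> 'k::field) \<Rightarrow> ('g \<Rightarrow> 'k)" where
  "gsym G x = sc (1/2) (x \<oplus>\<^bsub>grp_alg G\<^esub> grp_star G x)"

lemma sc_apply: "sc c a g = c * a g" by (simp add: sc_def)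
lemma star_apply: "grp_star G a g = (if g \<in> carrier G then a (inv\<^bsub>G\<^esub> g) else 0)"
  by (simp add: grp_star_def)

context fixes G :: "('g,'m) monoid_scheme" (structure) assumes grp: "group G"
begin

interpretation group G by (rule grp)

lemma ga_neg:
  assumes a: "a \<in> carrier (grp_alg G :: ('g \<Rightarrow> 'k::field) ring)"
  shows "\<ominus>\<^bsub>grp_alg G\<^esub> a = (\<lambda>g. - a g)"
proof -
  interpret R: ring "grp_alg G :: ('g \<Rightarrow> 'k::field) ring" by (rule ring_ga[OF grp])
  have c: "(\<lambda>g. - a g) \<in> carrier (grp_alg G :: ('g \<Rightarrow> 'k::field) ring)"
    using a by (auto simp: ga_carrier fsupp_def)
  show ?thesis
    by (rule R.minus_equality[OF _ a c]) (simp add: ga_add ga_zero)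
qed

lemma ga_minus:
  assumes a: "a \<in> carrier (grp_alg G :: ('g \<Rightarrow> 'k::field) ring)"
    and b: "b \<in> carrier (grp_alg G :: ('g \<Rightarrow> 'k::field) ring)"
  shows "a \<ominus>\<^bsub>grp_alg G\<^esub> b = (\<lambda>g. a g - b g)"
  by (simp add: a_minus_def ga_neg[OF b] ga_add)

lemma star_closed:
  assumes a: "a \<in> carrier (grp_alg G :: ('g \<Rightarrow> 'k::field) ring)"
  shows "grp_star G a \<in> carrier (grp_alg G)"
proof (rule ga_memI[of "(\<lambda>x. inv x) ` fsupp a"])
  show "finite ((\<lambda>x. inv x) ` fsupp a)" "(\<lambda>x. inv x) ` fsupp a \<subseteq> carrier G" using a by (auto simp: ga_carrier)
  fix g assume g: "g \<notin> (\<lambda>x. inv x) ` fsupp a"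
  show "grp_star G a g = 0"
  proof (cases "g \<in> carrier G \<and> a (inv g) \<noteq> 0")
    case True
    hence "inv g \<in> fsupp a" "g = inv (inv g)" by (auto simp: fsupp_def)
    hence "g \<in> (\<lambda>x. inv x) ` fsupp a" by blast
    thus ?thesis using g by blast
  qed (auto simp: star_apply)
qed

lemma sc_closed:
  assumes a: "a \<in> carrier (grp_alg G :: ('g \<Rightarrow> 'k::field) ring)"
  shows "sc c a \<in> carrier (grp_alg G)"
  by (rule ga_memI[of "fsupp a"]) (use a in \<open>auto simp: ga_carrier sc_apply fsupp_def\<close>)

lemma star_add:
  assumes a: "a \<in> carrier (grp_alg G :: ('g \<Rightarrow> 'k::field) ring)"
    and b: "b \<in> carrier (grp_alg G :: ('g \<Rightarrow> 'k::field) ring)"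
  shows "grp_star G (a \<oplus>\<^bsub>grp_alg G\<^esub> b) = grp_star G a \<oplus>\<^bsub>grp_alg G\<^esub> grp_star G b"
  by (rule ext) (simp add: star_apply ga_add)

lemma star_neg:
  assumes a: "a \<in> carrier (grp_alg G :: ('g \<Rightarrow> 'k::field) ring)"
  shows "grp_star G (\<ominus>\<^bsub>grp_alg G\<^esub> a) = \<ominus>\<^bsub>grp_alg G\<^esub> grp_star G a"
  by (rule ext) (simp add: star_apply ga_neg a star_closed)

lemma star_minus:
  assumes a: "a \<in> carrier (grp_alg G :: ('g \<Rightarrow> 'k::field) ring)"
    and b: "b \<in> carrier (grp_alg G :: ('g \<Rightarrow> 'k::field) ring)"
  shows "grp_star G (a \<ominus>\<^bsub>grp_alg G\<^esub> b) = grp_star G a \<ominus>\<^bsub>grp_alg G\<^esub> grp_star G b"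
  by (rule ext) (simp add: star_apply ga_minus a b star_closed)

lemma star_star:
  assumes a: "a \<in> carrier (grp_alg G :: ('g \<Rightarrow> 'k::field) ring)"
  shows "grp_star G (grp_star G a) = a"
  by (rule ext) (use a in \<open>auto simp: star_apply ga_out\<close>)

lemma star_sc: "grp_star G (sc c a) = sc c (grp_star G a)"
  by (rule ext) (simp add: star_apply sc_apply)

lemma star_elt: "g \<in> carrier G \<Longrightarrow> grp_star G (grp_elt g :: 'g \<Rightarrow> 'k::field) = grp_elt (inv g)"
  by (rule ext) (auto simp: star_apply grp_elt_def)

lemma star_mult:
  assumes a: "a \<in> carrier (grp_alg G :: ('g \<Rightarrow> 'k::field) ring)"
    and b: "b \<in> carrier (grp_alg G :: ('g \<Rightarrow> 'k::field) ring)"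
  shows "grp_star G (a \<otimes>\<^bsub>grp_alg G\<^esub> b) = grp_star G b \<otimes>\<^bsub>grp_alg G\<^esub> grp_star G a"
proof (rule ga_eqI[where G=G])
  show "grp_star G (a \<otimes>\<^bsub>grp_alg G\<^esub> b) \<in> carrier (grp_alg G)"
    by (rule star_closed) (simp add: mult_closed[OF grp] a b)
  show "grp_star G b \<otimes>\<^bsub>grp_alg G\<^esub> grp_star G a \<in> carrier (grp_alg G)"
    by (simp add: mult_closed[OF grp] a b star_closed)
  fix g assume g: "g \<in> carrier G"
  have fa: "finite (fsupp a)" "fsupp a \<subseteq> carrier G" using a by (auto simp: ga_carrier)
  have "grp_star G (a \<otimes>\<^bsub>grp_alg G\<^esub> b) g = (\<Sum>h\<in>fsupp a. a h * b (inv h \<otimes> inv g))"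
    using g by (simp add: star_apply mult_apply[OF grp a _ fa(1)])
  also have "\<dots> = (\<Sum>h\<in>fsupp a. b (inv (g \<otimes> h)) * a h)"
    by (rule sum.cong[OF refl]) (use g fa in \<open>auto simp: inv_mult_group mult.commute\<close>)
  also have "\<dots> = (\<Sum>k\<in>(\<lambda>x. inv x) ` fsupp a. b (inv (g \<otimes> inv k)) * a (inv k))"
  proof -
    have "inj_on (\<lambda>x. inv x) (fsupp a)" using fa by (auto simp: inj_on_def)
    hence "(\<Sum>k\<in>(\<lambda>x. inv x) ` fsupp a. b (inv (g \<otimes> inv k)) * a (inv k)) = (\<Sum>h\<in>fsupp a. b (inv (g \<otimes> inv (inv h))) * a (inv (inv h)))"
      by (simp add: sum.reindex)
    also have "\<dots> = (\<Sum>h\<in>fsupp a. b (inv (g \<otimes> h)) * a h)"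
      by (rule sum.cong[OF refl]) (use fa in auto)
    finally show ?thesis by simp
  qed
  also have "\<dots> = (grp_star G b \<otimes>\<^bsub>grp_alg G\<^esub> grp_star G a) g"
  proof -
    have T: "finite ((\<lambda>x. inv x) ` fsupp a)" "(\<lambda>x. inv x) ` fsupp a \<subseteq> carrier G" using fa by auto
    have S: "fsupp (grp_star G a) \<subseteq> (\<lambda>x. inv x) ` fsupp a"
    proof
      fix x assume "x \<in> fsupp (grp_star G a)"
      hence x: "x \<in> carrier G" "a (inv x) \<noteq> 0" by (auto simp: fsupp_def star_apply split: if_splits)
      hence "inv x \<in> fsupp a" by (simp add: fsupp_def)
      moreover have "x = inv (inv x)" using x by simp
      ultimately show "x \<in> (\<lambda>x. inv x) ` fsupp a" by blast
    qed
    have "(grp_star G b \<otimes>\<^bsub>grp_alg G\<^esub> grp_star G a) g = (\<Sum>k\<in>(\<lambda>x. inv x) ` fsupp a. grp_star G b (g \<otimes> inv k) * grp_star G a k)"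
      by (rule mult_apply2[OF grp star_closed[OF b] star_closed[OF a] g T(1) S T(2)])
    also have "\<dots> = (\<Sum>k\<in>(\<lambda>x. inv x) ` fsupp a. b (inv (g \<otimes> inv k)) * a (inv k))"
      by (rule sum.cong[OF refl]) (use g fa in \<open>auto simp: star_apply\<close>)
    finally show ?thesis by simp
  qed
  finally show "grp_star G (a \<otimes>\<^bsub>grp_alg G\<^esub> b) g = (grp_star G b \<otimes>\<^bsub>grp_alg G\<^esub> grp_star G a) g" .
qed

end

lemma (in ring) idealI':
  assumes "J \<subseteq> carrier R" "\<zero> \<in> J" "\<And>a b. a \<in> J \<Longrightarrow> b \<in> J \<Longrightarrow> a \<oplus> b \<in> J"
    "\<And>a. a \<in> J \<Longrightarrow> \<ominus> a \<in> J"
    "\<And>a x. a \<in> J \<Longrightarrow> x \<in> carrier R \<Longrightarrow> x \<otimes> a \<in> J"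
    "\<And>a x. a \<in> J \<Longrightarrow> x \<in> carrier R \<Longrightarrow> a \<otimes> x \<in> J"
  shows "ideal J R"
proof (rule idealI[OF ring_axioms])
  show "subgroup J (add_monoid R)"
    by (rule add.subgroupI) (use assms in \<open>auto simp: a_inv_def[symmetric]\<close>)
qed (use assms in auto)

context ideal
begin

lemma q_carrier: "carrier (R Quot I) = {I +> x | x. x \<in> carrier R}"
  by (auto simp: FactRing_def A_RCOSETS_def')

lemma q_add: "x \<in> carrier R \<Longrightarrow> y \<in> carrier R \<Longrightarrow> (I +> x) \<oplus>\<^bsub>R Quot I\<^esub> (I +> y) = I +> (x \<oplus> y)"
  by (simp add: FactRing_def a_rcos_sum)

lemma q_mult: "x \<in> carrier R \<Longrightarrow> y \<in> carrier R \<Longrightarrow> (I +> x) \<otimes>\<^bsub>R Quot I\<^esub> (I +> y) = I +> (x \<otimes> y)"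
  by (simp add: FactRing_def rcoset_mult_add)

lemma q_zero: "\<zero>\<^bsub>R Quot I\<^esub> = I"
  by (simp add: FactRing_def)

lemma q_one: "\<one>\<^bsub>R Quot I\<^esub> = I +> \<one>"
  by (simp add: FactRing_def)

lemma q_eq: "x \<in> carrier R \<Longrightarrow> y \<in> carrier R \<Longrightarrow> (I +> x = I +> y) = (x \<ominus> y \<in> I)"
  using quotient_eq_iff_same_a_r_cos[OF is_ideal] by simp

lemma q_zero_iff: "x \<in> carrier R \<Longrightarrow> (I +> x = I) = (x \<in> I)"
proof -
  assume x: "x \<in> carrier R"
  have "I = I +> \<zero>" by (simp add: a_rcos_const)
  hence "(I +> x = I) = (I +> x = I +> \<zero>)" by simp
  also have "\<dots> = (x \<ominus> \<zero> \<in> I)" by (rule q_eq[OF x zero_closed])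
  also have "\<dots> = (x \<in> I)" using x by (simp add: minus_eq)
  finally show ?thesis .
qed

lemma q_cls_closed: "x \<in> carrier R \<Longrightarrow> I +> x \<in> carrier (R Quot I)"
  using q_carrier by auto

lemma q_neg: "x \<in> carrier R \<Longrightarrow> \<ominus>\<^bsub>R Quot I\<^esub> (I +> x) = I +> (\<ominus> x)"
proof -
  assume x: "x \<in> carrier R"
  interpret Q: ring "R Quot I" by (rule quotient_is_ring)
  show ?thesis
    by (rule Q.minus_equality) (use x in \<open>simp_all add: q_add q_cls_closed q_zero a_rcos_const l_neg\<close>)
qed

lemma q_minus: "x \<in> carrier R \<Longrightarrow> y \<in> carrier R \<Longrightarrow> (I +> x) \<ominus>\<^bsub>R Quot I\<^esub> (I +> y) = I +> (x \<ominus> y)"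
  by (simp add: a_minus_def q_neg q_add)

lemma q_some: assumes "U \<in> carrier (R Quot I)"
  shows "(SOME x. x \<in> U) \<in> carrier R" "I +> (SOME x. x \<in> U) = U"
proof -
  obtain x where x: "x \<in> carrier R" "U = I +> x" using assms q_carrier by auto
  have "x \<in> U" using x a_rcos_self by simp
  hence s: "(SOME x. x \<in> U) \<in> U" by (rule someI)
  thus "(SOME x. x \<in> U) \<in> carrier R" using x a_elemrcos_carrier by simp
  show "I +> (SOME x. x \<in> U) = U" using s x a_repr_independence' by simp
qed

end


lemma (in ring) trace_ident:
  assumes "x \<in> carrier R" "y \<in> carrier R" "x' \<in> carrier R" "y' \<in> carrier R"
  shows "x\<otimes>y \<oplus> y'\<otimes>x' \<ominus> (y\<otimes>x \<oplus> x'\<otimes>y') = ((y\<oplus>y')\<otimes>(x\<oplus>x') \<ominus> (x\<oplus>x')\<otimes>(y\<oplus>y')) \<oplus> (x\<otimes>(y\<oplus>y') \<ominus> (y\<oplus>y')\<otimes>x) \<ominus> (y\<otimes>(x\<oplus>x') \<ominus> (x\<oplus>x')\<otimes>y)"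
  using assms by algebra

context fixes G :: "('g,'m) monoid_scheme" (structure) assumes grp: "group G"
begin

interpretation group G by (rule grp)

lemma ideal_I: "ideal (comm_ideal G :: ('g \<Rightarrow> 'k::field) set) (grp_alg G)"
proof -
  interpret R: ring "grp_alg G :: ('g \<Rightarrow> 'k::field) ring" by (rule ring_ga[OF grp])
  show ?thesis unfolding comm_ideal_def by (rule R.genideal_ideal) auto
qed

lemma gen_I:
  assumes a: "a \<in> carrier (grp_alg G :: ('g \<Rightarrow> 'k::field) ring)"
    and b: "b \<in> carrier (grp_alg G :: ('g \<Rightarrow> 'k::field) ring)" and bs: "grp_star G b = b"
  shows "a \<otimes>\<^bsub>grp_alg G\<^esub> b \<ominus>\<^bsub>grp_alg G\<^esub> b \<otimes>\<^bsub>grp_alg G\<^esub> a \<in> comm_ideal G"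
proof -
  interpret R: ring "grp_alg G :: ('g \<Rightarrow> 'k::field) ring" by (rule ring_ga[OF grp])
  show ?thesis unfolding comm_ideal_def
    by (rule R.genideal_self[THEN subsetD]) (use a b bs in auto)
qed

lemma sc_mult:
  assumes a: "a \<in> carrier (grp_alg G :: ('g \<Rightarrow> 'k::field) ring)"
  shows "sc c a = sc c \<one>\<^bsub>grp_alg G\<^esub> \<otimes>\<^bsub>grp_alg G\<^esub> a"
proof (rule ga_eqI[where G=G])
  show "sc c a \<in> carrier (grp_alg G)" by (rule sc_closed[OF grp a])
  have o: "sc c \<one>\<^bsub>grp_alg G\<^esub> \<in> carrier (grp_alg G :: ('g \<Rightarrow> 'k::field) ring)"
    by (rule sc_closed[OF grp]) (simp add: ga_one elt_closed[OF grp])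
  thus "sc c \<one>\<^bsub>grp_alg G\<^esub> \<otimes>\<^bsub>grp_alg G\<^esub> a \<in> carrier (grp_alg G)" by (simp add: mult_closed[OF grp] a)
  fix g assume g: "g \<in> carrier G"
  show "sc c a g = (sc c \<one>\<^bsub>grp_alg G\<^esub> \<otimes>\<^bsub>grp_alg G\<^esub> a) g"
    by (subst mult_apply[OF grp o g, of "{\<one>}"]) (auto simp: sc_apply ga_one grp_elt_def fsupp_def g)
qed

lemma sc_I:
  assumes i: "i \<in> (comm_ideal G :: ('g \<Rightarrow> 'k::field) set)"
  shows "sc c i \<in> comm_ideal G"
proof -
  interpret I: ideal "comm_ideal G :: ('g \<Rightarrow> 'k::field) set" "grp_alg G" by (rule ideal_I)
  have o: "sc c \<one>\<^bsub>grp_alg G\<^esub> \<in> carrier (grp_alg G :: ('g \<Rightarrow> 'k::field) ring)"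
    by (rule sc_closed[OF grp]) (simp add: ga_one elt_closed[OF grp])
  show ?thesis using sc_mult[OF I.Icarr[OF i]] I.I_l_closed[OF i o] by simp
qed

lemma star_I:
  assumes i: "i \<in> (comm_ideal G :: ('g \<Rightarrow> 'k::field) set)"
  shows "grp_star G i \<in> comm_ideal G"
proof -
  interpret R: ring "grp_alg G :: ('g \<Rightarrow> 'k::field) ring" by (rule ring_ga[OF grp])
  interpret I: ideal "comm_ideal G :: ('g \<Rightarrow> 'k::field) set" "grp_alg G" by (rule ideal_I)
  let ?Q = "{x \<in> carrier (grp_alg G :: ('g \<Rightarrow> 'k::field) ring). grp_star G x \<in> comm_ideal G}"
  have "ideal ?Q (grp_alg G)"
  proof (rule R.idealI')
    have "grp_star G (\<zero>\<^bsub>grp_alg G\<^esub>) = (\<zero>\<^bsub>grp_alg G\<^esub> :: 'g \<Rightarrow> 'k)" by (rule ext) (simp add: star_apply ga_zero)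
    thus "\<zero>\<^bsub>grp_alg G\<^esub> \<in> ?Q" by (simp add: I.zero_closed)
  next
    fix a b :: "'g \<Rightarrow> 'k" assume "a \<in> ?Q" "b \<in> ?Q"
    thus "a \<oplus>\<^bsub>grp_alg G\<^esub> b \<in> ?Q" by (simp add: star_add[OF grp] I.a_closed)
  next
    fix a :: "'g \<Rightarrow> 'k" assume "a \<in> ?Q"
    thus "\<ominus>\<^bsub>grp_alg G\<^esub> a \<in> ?Q" by (simp add: star_neg[OF grp] I.a_inv_closed)
  next
    fix a x :: "'g \<Rightarrow> 'k" assume "a \<in> ?Q" "x \<in> carrier (grp_alg G)"
    thus "x \<otimes>\<^bsub>grp_alg G\<^esub> a \<in> ?Q" "a \<otimes>\<^bsub>grp_alg G\<^esub> x \<in> ?Q"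
      by (simp_all add: star_mult[OF grp] I.I_l_closed I.I_r_closed star_closed[OF grp])
  qed auto
  moreover have "{(a \<otimes>\<^bsub>grp_alg G\<^esub> b) \<ominus>\<^bsub>grp_alg G\<^esub> (b \<otimes>\<^bsub>grp_alg G\<^esub> a) | a b.
        a \<in> carrier (grp_alg G) \<and> b \<in> carrier (grp_alg G) \<and> grp_star G b = b} \<subseteq> ?Q"
  proof clarify
    fix a b :: "'g \<Rightarrow> 'k" assume a: "a \<in> carrier (grp_alg G)" and b: "b \<in> carrier (grp_alg G)" and bs: "grp_star G b = b"
    have sa: "grp_star G a \<in> carrier (grp_alg G)" by (rule star_closed[OF grp a])
    have "grp_star G (a \<otimes>\<^bsub>grp_alg G\<^esub> b \<ominus>\<^bsub>grp_alg G\<^esub> b \<otimes>\<^bsub>grp_alg G\<^esub> a)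
       = \<ominus>\<^bsub>grp_alg G\<^esub> (grp_star G a \<otimes>\<^bsub>grp_alg G\<^esub> b \<ominus>\<^bsub>grp_alg G\<^esub> b \<otimes>\<^bsub>grp_alg G\<^esub> grp_star G a)"
    proof -
      have "grp_star G (a \<otimes>\<^bsub>grp_alg G\<^esub> b \<ominus>\<^bsub>grp_alg G\<^esub> b \<otimes>\<^bsub>grp_alg G\<^esub> a)
          = grp_star G (a \<otimes>\<^bsub>grp_alg G\<^esub> b) \<ominus>\<^bsub>grp_alg G\<^esub> grp_star G (b \<otimes>\<^bsub>grp_alg G\<^esub> a)"
        by (rule star_minus[OF grp]) (use a b in simp_all)
      also have "\<dots> = b \<otimes>\<^bsub>grp_alg G\<^esub> grp_star G a \<ominus>\<^bsub>grp_alg G\<^esub> grp_star G a \<otimes>\<^bsub>grp_alg G\<^esub> b"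
        using a b bs by (simp add: star_mult[OF grp])
      also have "\<dots> = \<ominus>\<^bsub>grp_alg G\<^esub> (grp_star G a \<otimes>\<^bsub>grp_alg G\<^esub> b \<ominus>\<^bsub>grp_alg G\<^esub> b \<otimes>\<^bsub>grp_alg G\<^esub> grp_star G a)"
        using sa b by algebra
      finally show ?thesis .
    qed
    moreover have "grp_star G a \<otimes>\<^bsub>grp_alg G\<^esub> b \<ominus>\<^bsub>grp_alg G\<^esub> b \<otimes>\<^bsub>grp_alg G\<^esub> grp_star G a \<in> comm_ideal G"
      by (rule gen_I[OF sa b bs])
    ultimately show "a \<otimes>\<^bsub>grp_alg G\<^esub> b \<ominus>\<^bsub>grp_alg G\<^esub> b \<otimes>\<^bsub>grp_alg G\<^esub> a \<in> carrier (grp_alg G) \<and>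
         grp_star G (a \<otimes>\<^bsub>grp_alg G\<^esub> b \<ominus>\<^bsub>grp_alg G\<^esub> b \<otimes>\<^bsub>grp_alg G\<^esub> a) \<in> comm_ideal G"
      using a b by (simp add: I.a_inv_closed)
  qed
  ultimately have "comm_ideal G \<subseteq> ?Q" unfolding comm_ideal_def by (rule R.genideal_minimal)
  thus ?thesis using i by blast
qed

end

lemma (in ideal) Iadd: "a \<in> I \<Longrightarrow> b \<in> I \<Longrightarrow> a \<oplus> b \<in> I" by simp
lemma (in ideal) Ineg: "a \<in> I \<Longrightarrow> \<ominus> a \<in> I" by simp
lemma (in ideal) Iminus: "a \<in> I \<Longrightarrow> b \<in> I \<Longrightarrow> a \<ominus> b \<in> I" by (simp add: a_minus_def)
lemma (in ideal) Izero: "\<zero> \<in> I" by simp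

context fixes G :: "('g,'m) monoid_scheme" (structure) assumes grp: "group G"
begin

interpretation group G by (rule grp)

lemma gsym_apply: "gsym G x g = (x g + grp_star G x g) / 2"
  by (simp add: gsym_def sc_apply ga_add)

lemma gsym_closed:
  assumes x: "x \<in> carrier (grp_alg G :: ('g \<Rightarrow> 'k::field_char_0) ring)"
  shows "gsym G x \<in> carrier (grp_alg G)"
  unfolding gsym_def by (intro sc_closed[OF grp] add_closed[OF grp] star_closed[OF grp] x)

lemma star_gsym:
  assumes x: "x \<in> carrier (grp_alg G :: ('g \<Rightarrow> 'k::field_char_0) ring)"
  shows "grp_star G (gsym G x) = gsym G x"
  by (rule ext) (use x in \<open>auto simp: gsym_apply star_apply ga_out\<close>)

lemma gsym_fix:
  assumes x: "x \<in> carrier (grp_alg G :: ('g \<Rightarrow> 'k::field_char_0) ring)" and s: "grp_star G x = x"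
  shows "gsym G x = x"
  by (rule ext) (simp add: gsym_apply s)

lemma gsym_add:
  assumes x: "x \<in> carrier (grp_alg G :: ('g \<Rightarrow> 'k::field_char_0) ring)"
    and y: "y \<in> carrier (grp_alg G :: ('g \<Rightarrow> 'k::field_char_0) ring)"
  shows "gsym G (x \<oplus>\<^bsub>grp_alg G\<^esub> y) = gsym G x \<oplus>\<^bsub>grp_alg G\<^esub> gsym G y"
  by (rule ext) (simp add: gsym_apply star_apply ga_add add_divide_distrib)

lemma gsym_neg:
  assumes x: "x \<in> carrier (grp_alg G :: ('g \<Rightarrow> 'k::field_char_0) ring)"
  shows "gsym G (\<ominus>\<^bsub>grp_alg G\<^esub> x) = \<ominus>\<^bsub>grp_alg G\<^esub> gsym G x"
  by (rule ext) (simp add: gsym_apply star_apply ga_neg[OF grp] x gsym_closed field_simps)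

lemma gsym_minus:
  assumes x: "x \<in> carrier (grp_alg G :: ('g \<Rightarrow> 'k::field_char_0) ring)"
    and y: "y \<in> carrier (grp_alg G :: ('g \<Rightarrow> 'k::field_char_0) ring)"
  shows "gsym G (x \<ominus>\<^bsub>grp_alg G\<^esub> y) = gsym G x \<ominus>\<^bsub>grp_alg G\<^esub> gsym G y"
  by (rule ext) (simp add: gsym_apply star_apply ga_minus[OF grp] x y gsym_closed field_simps)

lemma gsym_I:
  assumes i: "i \<in> (comm_ideal G :: ('g \<Rightarrow> 'k::field_char_0) set)"
  shows "gsym G i \<in> comm_ideal G"
proof -
  interpret I: ideal "comm_ideal G :: ('g \<Rightarrow> 'k::field_char_0) set" "grp_alg G" by (rule ideal_I[OF grp])
  show ?thesis unfolding gsym_def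
    by (rule sc_I[OF grp], rule I.Iadd[OF i star_I[OF grp i]])
qed

lemma gsym_diff:
  assumes x: "x \<in> carrier (grp_alg G :: ('g \<Rightarrow> 'k::field_char_0) ring)"
    and s: "grp_star G x \<ominus>\<^bsub>grp_alg G\<^esub> x \<in> comm_ideal G"
  shows "gsym G x \<ominus>\<^bsub>grp_alg G\<^esub> x \<in> comm_ideal G"
proof -
  have sx: "grp_star G x \<in> carrier (grp_alg G)" by (rule star_closed[OF grp x])
  have "gsym G x \<ominus>\<^bsub>grp_alg G\<^esub> x = sc (1/2) (grp_star G x \<ominus>\<^bsub>grp_alg G\<^esub> x)"
    by (rule ext) (simp add: ga_minus[OF grp] x sx gsym_closed gsym_apply sc_apply field_simps)
  thus ?thesis using sc_I[OF grp s] by simp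
qed

lemma trace_I:
  assumes x: "x \<in> carrier (grp_alg G :: ('g \<Rightarrow> 'k::field_char_0) ring)"
    and y: "y \<in> carrier (grp_alg G :: ('g \<Rightarrow> 'k::field_char_0) ring)"
  shows "gsym G (x \<otimes>\<^bsub>grp_alg G\<^esub> y) \<ominus>\<^bsub>grp_alg G\<^esub> gsym G (y \<otimes>\<^bsub>grp_alg G\<^esub> x) \<in> comm_ideal G"
proof -
  interpret R: ring "grp_alg G :: ('g \<Rightarrow> 'k::field_char_0) ring" by (rule ring_ga[OF grp])
  interpret I: ideal "comm_ideal G :: ('g \<Rightarrow> 'k::field_char_0) set" "grp_alg G" by (rule ideal_I[OF grp])
  define x' where "x' = grp_star G x"
  define y' where "y' = grp_star G y"
  have x': "x' \<in> carrier (grp_alg G)" unfolding x'_def by (rule star_closed[OF grp x])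
  have y': "y' \<in> carrier (grp_alg G)" unfolding y'_def by (rule star_closed[OF grp y])
  have sxx: "grp_star G (x \<oplus>\<^bsub>grp_alg G\<^esub> x') = x \<oplus>\<^bsub>grp_alg G\<^esub> x'"
    unfolding x'_def by (simp add: star_add[OF grp] x star_closed[OF grp] star_star[OF grp] R.a_comm)
  have syy: "grp_star G (y \<oplus>\<^bsub>grp_alg G\<^esub> y') = y \<oplus>\<^bsub>grp_alg G\<^esub> y'"
    unfolding y'_def by (simp add: star_add[OF grp] y star_closed[OF grp] star_star[OF grp] R.a_comm)
  have t: "x\<otimes>\<^bsub>grp_alg G\<^esub>y \<oplus>\<^bsub>grp_alg G\<^esub> y'\<otimes>\<^bsub>grp_alg G\<^esub>x' \<ominus>\<^bsub>grp_alg G\<^esub> (y\<otimes>\<^bsub>grp_alg G\<^esub>x \<oplus>\<^bsub>grp_alg G\<^esub> x'\<otimes>\<^bsub>grp_alg G\<^esub>y') \<in> comm_ideal G"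
    apply (subst R.trace_ident[OF x y x' y'])
    by (intro I.Iadd I.Iminus gen_I[OF grp] R.a_closed x y x' y' sxx syy)
  have "gsym G (x \<otimes>\<^bsub>grp_alg G\<^esub> y) \<ominus>\<^bsub>grp_alg G\<^esub> gsym G (y \<otimes>\<^bsub>grp_alg G\<^esub> x)
     = sc (1/2) (x\<otimes>\<^bsub>grp_alg G\<^esub>y \<oplus>\<^bsub>grp_alg G\<^esub> y'\<otimes>\<^bsub>grp_alg G\<^esub>x' \<ominus>\<^bsub>grp_alg G\<^esub> (y\<otimes>\<^bsub>grp_alg G\<^esub>x \<oplus>\<^bsub>grp_alg G\<^esub> x'\<otimes>\<^bsub>grp_alg G\<^esub>y'))"
    by (rule ext) (simp add: x'_def y'_def gsym_apply star_mult[OF grp] x y ga_minus[OF grp]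
        gsym_closed R.m_closed R.a_closed star_closed[OF grp] ga_add_apply sc_apply field_simps)
  thus ?thesis using sc_I[OF grp t] by simp
qed

end

context fixes G :: "('g,'m) monoid_scheme" (structure) assumes grp: "group G"
begin

interpretation group G by (rule grp)


lemma A_carrier: "carrier (A_alg G) = {A_cls G x | x. x \<in> carrier (grp_alg G :: ('g \<Rightarrow> 'k::field_char_0) ring)}"
  unfolding A_alg_def A_cls_def by (rule ideal.q_carrier[OF ideal_I[OF grp]])

lemma A_cls_closed: "x \<in> carrier (grp_alg G :: ('g \<Rightarrow> 'k::field_char_0) ring) \<Longrightarrow> A_cls G x \<in> carrier (A_alg G)"
  using A_carrier by auto

lemma A_add: "x \<in> carrier (grp_alg G :: ('g \<Rightarrow> 'k::field_char_0) ring) \<Longrightarrow> y \<in> carrier (grp_alg G) \<Longrightarrow>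
  A_cls G x \<oplus>\<^bsub>A_alg G\<^esub> A_cls G y = A_cls G (x \<oplus>\<^bsub>grp_alg G\<^esub> y)"
  unfolding A_alg_def A_cls_def by (rule ideal.q_add[OF ideal_I[OF grp]])

lemma A_mult: "x \<in> carrier (grp_alg G :: ('g \<Rightarrow> 'k::field_char_0) ring) \<Longrightarrow> y \<in> carrier (grp_alg G) \<Longrightarrow>
  A_cls G x \<otimes>\<^bsub>A_alg G\<^esub> A_cls G y = A_cls G (x \<otimes>\<^bsub>grp_alg G\<^esub> y)"
  unfolding A_alg_def A_cls_def by (rule ideal.q_mult[OF ideal_I[OF grp]])

lemma A_neg: "x \<in> carrier (grp_alg G :: ('g \<Rightarrow> 'k::field_char_0) ring) \<Longrightarrow>
  \<ominus>\<^bsub>A_alg G\<^esub> A_cls G x = A_cls G (\<ominus>\<^bsub>grp_alg G\<^esub> x)"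
  unfolding A_alg_def A_cls_def by (rule ideal.q_neg[OF ideal_I[OF grp]])

lemma A_minus: "x \<in> carrier (grp_alg G :: ('g \<Rightarrow> 'k::field_char_0) ring) \<Longrightarrow> y \<in> carrier (grp_alg G) \<Longrightarrow>
  A_cls G x \<ominus>\<^bsub>A_alg G\<^esub> A_cls G y = A_cls G (x \<ominus>\<^bsub>grp_alg G\<^esub> y)"
  unfolding A_alg_def A_cls_def by (rule ideal.q_minus[OF ideal_I[OF grp]])

lemma A_zero: "\<zero>\<^bsub>A_alg G\<^esub> = (comm_ideal G :: ('g \<Rightarrow> 'k::field_char_0) set)"
  unfolding A_alg_def by (rule ideal.q_zero[OF ideal_I[OF grp]])

lemma A_one: "\<one>\<^bsub>A_alg G\<^esub> = A_cls G (\<one>\<^bsub>grp_alg G :: ('g \<Rightarrow> 'k::field_char_0) ring\<^esub>)"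
  unfolding A_alg_def A_cls_def by (rule ideal.q_one[OF ideal_I[OF grp]])

lemma A_eq: "x \<in> carrier (grp_alg G :: ('g \<Rightarrow> 'k::field_char_0) ring) \<Longrightarrow> y \<in> carrier (grp_alg G) \<Longrightarrow>
  (A_cls G x = A_cls G y) = (x \<ominus>\<^bsub>grp_alg G\<^esub> y \<in> comm_ideal G)"
  unfolding A_cls_def by (rule ideal.q_eq[OF ideal_I[OF grp]])

lemma A_zero_iff: "x \<in> carrier (grp_alg G :: ('g \<Rightarrow> 'k::field_char_0) ring) \<Longrightarrow>
  (A_cls G x = comm_ideal G) = (x \<in> comm_ideal G)"
  unfolding A_cls_def by (rule ideal.q_zero_iff[OF ideal_I[OF grp]])

lemma A_some: "U \<in> carrier (A_alg G :: ('g \<Rightarrow> 'k::field_char_0) set ring) \<Longrightarrow>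
   (SOME x. x \<in> U) \<in> carrier (grp_alg G :: ('g \<Rightarrow> 'k::field_char_0) ring) \<and> A_cls G (SOME x. x \<in> U) = U"
  unfolding A_alg_def A_cls_def using ideal.q_some[OF ideal_I[OF grp]] by blast

lemma ring_A: "ring (A_alg G :: ('g \<Rightarrow> 'k::field_char_0) set ring)"
  unfolding A_alg_def by (rule ideal.quotient_is_ring[OF ideal_I[OF grp]])

lemma A_star_cls:
  assumes x: "x \<in> carrier (grp_alg G :: ('g \<Rightarrow> 'k::field_char_0) ring)"
  shows "A_star G (A_cls G x) = A_cls G (grp_star G x)"
proof -
  let ?r = "SOME y. y \<in> A_cls G x"
  have r: "?r \<in> carrier (grp_alg G :: ('g \<Rightarrow> 'k::field_char_0) ring)" "A_cls G ?r = A_cls G x"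
    using A_some[OF A_cls_closed[OF x]] by auto
  have "?r \<ominus>\<^bsub>grp_alg G\<^esub> x \<in> comm_ideal G" using r A_eq[OF r(1) x] by simp
  hence "grp_star G (?r \<ominus>\<^bsub>grp_alg G\<^esub> x) \<in> comm_ideal G" by (rule star_I[OF grp])
  hence "grp_star G ?r \<ominus>\<^bsub>grp_alg G\<^esub> grp_star G x \<in> comm_ideal G" by (simp add: star_minus[OF grp] r x)
  hence "A_cls G (grp_star G ?r) = A_cls G (grp_star G x)"
    using A_eq star_closed[OF grp] r x by blast
  thus ?thesis unfolding A_star_def by simp
qed

lemma A_bar_cls:
  assumes x: "x \<in> carrier (grp_alg G :: ('g \<Rightarrow> 'k::field_char_0) ring)"
  shows "A_bar G (A_cls G x) = A_cls G (gsym G x)"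
proof -
  let ?r = "SOME y. y \<in> A_cls G x"
  have r: "?r \<in> carrier (grp_alg G :: ('g \<Rightarrow> 'k::field_char_0) ring)" "A_cls G ?r = A_cls G x"
    using A_some[OF A_cls_closed[OF x]] by auto
  have "?r \<ominus>\<^bsub>grp_alg G\<^esub> x \<in> comm_ideal G" using r A_eq[OF r(1) x] by simp
  hence "gsym G (?r \<ominus>\<^bsub>grp_alg G\<^esub> x) \<in> comm_ideal G" by (rule gsym_I[OF grp])
  hence "gsym G ?r \<ominus>\<^bsub>grp_alg G\<^esub> gsym G x \<in> comm_ideal G" by (simp add: gsym_minus[OF grp] r x)
  hence "A_cls G (gsym G ?r) = A_cls G (gsym G x)"
    using A_eq gsym_closed[OF grp] r x by blast
  moreover have "(\<lambda>g. (?r g + grp_star G ?r g) / 2) = gsym G ?r"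
    by (rule ext) (simp add: gsym_apply[OF grp])
  ultimately show ?thesis unfolding A_bar_def Let_def by simp
qed

lemma sharp_cls:
  assumes x: "x \<in> carrier (grp_alg G :: ('g \<Rightarrow> 'k::field_char_0) ring)"
    and s: "grp_star G x \<ominus>\<^bsub>grp_alg G\<^esub> x \<in> comm_ideal G"
  shows "A_cls G x \<in> sharp G"
  unfolding sharp_def using A_cls_closed[OF x] A_star_cls[OF x] A_eq[OF star_closed[OF grp x] x] s by simp

lemma sharp_cls_sym:
  assumes x: "x \<in> carrier (grp_alg G :: ('g \<Rightarrow> 'k::field_char_0) ring)"
    and s: "grp_star G x = x"
  shows "A_cls G x \<in> sharp G"
proof -
  interpret I: ideal "comm_ideal G :: ('g \<Rightarrow> 'k::field_char_0) set" "grp_alg G" by (rule ideal_I[OF grp])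
  show ?thesis by (rule sharp_cls[OF x]) (simp add: s a_minus_def I.r_neg x)
qed

lemma sharp_rep:
  assumes U: "U \<in> (sharp G :: ('g \<Rightarrow> 'k::field_char_0) set set)"
  shows "\<exists>x\<in>carrier (grp_alg G :: ('g \<Rightarrow> 'k::field_char_0) ring). U = A_cls G x \<and> grp_star G x = x"
proof -
  let ?r = "SOME y. y \<in> U"
  have Uc: "U \<in> carrier (A_alg G)" "A_star G U = U" using U by (auto simp: sharp_def)
  have r: "?r \<in> carrier (grp_alg G :: ('g \<Rightarrow> 'k::field_char_0) ring)" "A_cls G ?r = U"
    using A_some[OF Uc(1)] by auto
  have "A_cls G (grp_star G ?r) = A_cls G ?r" using Uc(2) A_star_cls[OF r(1)] r(2) by simp
  hence "grp_star G ?r \<ominus>\<^bsub>grp_alg G\<^esub> ?r \<in> comm_ideal G" using A_eq[OF star_closed[OF grp r(1)] r(1)] by simp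
  hence "gsym G ?r \<ominus>\<^bsub>grp_alg G\<^esub> ?r \<in> comm_ideal G" by (rule gsym_diff[OF grp r(1)])
  hence "A_cls G (gsym G ?r) = U" using A_eq[OF gsym_closed[OF grp r(1)] r(1)] r(2) by simp
  thus ?thesis using gsym_closed[OF grp r(1)] star_gsym[OF grp r(1)] by metis
qed

end

context fixes G :: "('g,'m) monoid_scheme" (structure) assumes grp: "group G"
begin

interpretation group G by (rule grp)

lemma sharp_sub: "(sharp G :: ('g \<Rightarrow> 'k::field_char_0) set set) \<subseteq> carrier (A_alg G)"
  by (auto simp: sharp_def)

lemma sharp_mult:
  assumes U: "U \<in> (sharp G :: ('g \<Rightarrow> 'k::field_char_0) set set)" and V: "V \<in> sharp G"
  shows "U \<otimes>\<^bsub>A_alg G\<^esub> V \<in> sharp G"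
proof -
  interpret R: ring "grp_alg G :: ('g \<Rightarrow> 'k::field_char_0) ring" by (rule ring_ga[OF grp])
  interpret I: ideal "comm_ideal G :: ('g \<Rightarrow> 'k::field_char_0) set" "grp_alg G" by (rule ideal_I[OF grp])
  obtain x where x: "x \<in> carrier (grp_alg G)" "U = A_cls G x" "grp_star G x = x" using sharp_rep[OF grp U] by blast
  obtain y where y: "y \<in> carrier (grp_alg G)" "V = A_cls G y" "grp_star G y = y" using sharp_rep[OF grp V] by blast
  have "grp_star G (x \<otimes>\<^bsub>grp_alg G\<^esub> y) \<ominus>\<^bsub>grp_alg G\<^esub> x \<otimes>\<^bsub>grp_alg G\<^esub> y \<in> comm_ideal G"
  proof -
    have "y \<otimes>\<^bsub>grp_alg G\<^esub> x \<ominus>\<^bsub>grp_alg G\<^esub> x \<otimes>\<^bsub>grp_alg G\<^esub> y \<in> comm_ideal G"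
      by (rule gen_I[OF grp y(1) x(1) x(3)])
    thus ?thesis by (simp add: star_mult[OF grp] x y)
  qed
  hence "A_cls G (x \<otimes>\<^bsub>grp_alg G\<^esub> y) \<in> sharp G" by (rule sharp_cls[OF grp R.m_closed[OF x(1) y(1)]])
  thus ?thesis by (simp add: x y A_mult[OF grp])
qed

lemma sharp_add:
  assumes U: "U \<in> (sharp G :: ('g \<Rightarrow> 'k::field_char_0) set set)" and V: "V \<in> sharp G"
  shows "U \<oplus>\<^bsub>A_alg G\<^esub> V \<in> sharp G"
proof -
  interpret R: ring "grp_alg G :: ('g \<Rightarrow> 'k::field_char_0) ring" by (rule ring_ga[OF grp])
  obtain x where x: "x \<in> carrier (grp_alg G)" "U = A_cls G x" "grp_star G x = x" using sharp_rep[OF grp U] by blast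
  obtain y where y: "y \<in> carrier (grp_alg G)" "V = A_cls G y" "grp_star G y = y" using sharp_rep[OF grp V] by blast
  have "A_cls G (x \<oplus>\<^bsub>grp_alg G\<^esub> y) \<in> sharp G"
    by (rule sharp_cls_sym[OF grp R.a_closed[OF x(1) y(1)]]) (simp add: star_add[OF grp] x y)
  thus ?thesis by (simp add: x y A_add[OF grp])
qed

lemma sharp_neg:
  assumes U: "U \<in> (sharp G :: ('g \<Rightarrow> 'k::field_char_0) set set)"
  shows "\<ominus>\<^bsub>A_alg G\<^esub> U \<in> sharp G \<and> (\<exists>x\<in>carrier (grp_alg G). U = A_cls G x \<and> grp_star G x = x \<and>
      \<ominus>\<^bsub>A_alg G\<^esub> U = A_cls G (\<ominus>\<^bsub>grp_alg G\<^esub> x))"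
proof -
  interpret R: ring "grp_alg G :: ('g \<Rightarrow> 'k::field_char_0) ring" by (rule ring_ga[OF grp])
  obtain x where x: "x \<in> carrier (grp_alg G)" "U = A_cls G x" "grp_star G x = x" using sharp_rep[OF grp U] by blast
  have "A_cls G (\<ominus>\<^bsub>grp_alg G\<^esub> x) \<in> sharp G"
    by (rule sharp_cls_sym[OF grp R.a_inv_closed[OF x(1)]]) (simp add: star_neg[OF grp] x)
  thus ?thesis using x A_neg[OF grp] by auto
qed

lemma sharp_one: "\<one>\<^bsub>A_alg G\<^esub> \<in> (sharp G :: ('g \<Rightarrow> 'k::field_char_0) set set)"
proof -
  interpret R: ring "grp_alg G :: ('g \<Rightarrow> 'k::field_char_0) ring" by (rule ring_ga[OF grp])
  show ?thesis unfolding A_one[OF grp]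
    by (rule sharp_cls_sym[OF grp R.one_closed]) (simp add: ga_one star_elt[OF grp])
qed

lemma subring_sharp: "subring (sharp G :: ('g \<Rightarrow> 'k::field_char_0) set set) (A_alg G)"
proof -
  interpret A: ring "A_alg G :: ('g \<Rightarrow> 'k::field_char_0) set ring" by (rule ring_A[OF grp])
  show ?thesis
    by (rule A.subringI) (auto simp: sharp_sub sharp_one sharp_mult sharp_add sharp_neg)
qed

lemma ring_sharp: "ring (sharp_ring G :: ('g \<Rightarrow> 'k::field_char_0) set ring)"
proof -
  interpret A: ring "A_alg G :: ('g \<Rightarrow> 'k::field_char_0) set ring" by (rule ring_A[OF grp])
  show ?thesis unfolding sharp_ring_def by (rule A.subring_is_ring[OF subring_sharp])
qed

lemma sharp_ring_simps:
  "carrier (sharp_ring G) = sharp G"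
  "U \<oplus>\<^bsub>sharp_ring G\<^esub> V = U \<oplus>\<^bsub>A_alg G\<^esub> V"
  "U \<otimes>\<^bsub>sharp_ring G\<^esub> V = U \<otimes>\<^bsub>A_alg G\<^esub> V"
  "\<zero>\<^bsub>sharp_ring G\<^esub> = \<zero>\<^bsub>A_alg G\<^esub>"
  by (simp_all add: sharp_ring_def)

lemma sharp_ring_neg:
  assumes U: "U \<in> (sharp G :: ('g \<Rightarrow> 'k::field_char_0) set set)"
  shows "\<ominus>\<^bsub>sharp_ring G\<^esub> U = \<ominus>\<^bsub>A_alg G\<^esub> U"
proof -
  interpret A: ring "A_alg G :: ('g \<Rightarrow> 'k::field_char_0) set ring" by (rule ring_A[OF grp])
  interpret S: ring "sharp_ring G :: ('g \<Rightarrow> 'k::field_char_0) set ring" by (rule ring_sharp)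
  have Uc: "U \<in> carrier (A_alg G)" using U sharp_sub by blast
  have "\<ominus>\<^bsub>A_alg G\<^esub> U \<oplus>\<^bsub>A_alg G\<^esub> U = \<zero>\<^bsub>A_alg G\<^esub>" by (rule A.l_neg[OF Uc])
  thus ?thesis
    by (intro S.minus_equality) (simp_all add: sharp_ring_simps U sharp_neg)
qed

end

lemma mult_supp:
  assumes grp: "group G" and a: "a \<in> carrier (grp_alg G :: ('g \<Rightarrow> 'k::field) ring)" and b: "b \<in> carrier (grp_alg G)"
  shows "fsupp (a \<otimes>\<^bsub>grp_alg G\<^esub> b) \<subseteq> (\<lambda>(x,y). x \<otimes>\<^bsub>G\<^esub> y) ` (fsupp a \<times> fsupp b)"
proof
  interpret group G by (rule grp)
  let ?S = "(\<lambda>(x,y). x \<otimes>\<^bsub>G\<^esub> y) ` (fsupp a \<times> fsupp b)"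
  have fa: "fsupp a \<subseteq> carrier G" using a by (auto simp: ga_carrier)
  fix g assume g: "g \<in> fsupp (a \<otimes>\<^bsub>grp_alg G\<^esub> b)"
  hence gc: "g \<in> carrier G" by (auto simp: fsupp_def ga_mult split: if_splits)
  from g have "(\<Sum>h\<in>fsupp a. a h * b (inv\<^bsub>G\<^esub> h \<otimes>\<^bsub>G\<^esub> g)) \<noteq> 0"
    by (simp add: fsupp_def ga_mult gc)
  then obtain h where h: "h \<in> fsupp a" "a h * b (inv\<^bsub>G\<^esub> h \<otimes>\<^bsub>G\<^esub> g) \<noteq> 0"
    by (rule sum.not_neutral_contains_not_neutral)
  hence hc: "h \<in> carrier G" using fa by auto
  have "inv\<^bsub>G\<^esub> h \<otimes>\<^bsub>G\<^esub> g \<in> fsupp b" using h by (auto simp: fsupp_def)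
  hence "h \<otimes>\<^bsub>G\<^esub> (inv\<^bsub>G\<^esub> h \<otimes>\<^bsub>G\<^esub> g) \<in> ?S" using h by force
  thus "g \<in> ?S" using hc gc by (simp add: gc1[OF grp])
qed

context group_hom
begin

lemma map_apply:
  assumes a: "a \<in> carrier (grp_alg G :: ('a \<Rightarrow> 'k::field) ring)" and y: "y \<in> carrier H"
    and S: "finite S" "fsupp a \<subseteq> S"
  shows "grp_alg_map h H a y = (\<Sum>g\<in>{g\<in>S. h g = y}. a g)"
  unfolding grp_alg_map_def using y S
  by (auto intro!: sum.mono_neutral_left simp: fsupp_def)

lemma map_closed:
  assumes a: "a \<in> carrier (grp_alg G :: ('a \<Rightarrow> 'k::field) ring)"
  shows "grp_alg_map h H a \<in> carrier (grp_alg H)"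
proof (rule ga_memI[of "h ` fsupp a"])
  show "finite (h ` fsupp a)" "h ` fsupp a \<subseteq> carrier H" using a by (auto simp: ga_carrier)
  fix y assume "y \<notin> h ` fsupp a"
  hence e: "{g \<in> fsupp a. h g = y} = {}" by auto
  show "grp_alg_map h H a y = 0" unfolding grp_alg_map_def e by simp
qed

lemma map_add:
  assumes a: "a \<in> carrier (grp_alg G :: ('a \<Rightarrow> 'k::field) ring)" and b: "b \<in> carrier (grp_alg G)"
  shows "grp_alg_map h H (a \<oplus>\<^bsub>grp_alg G\<^esub> b) = grp_alg_map h H a \<oplus>\<^bsub>grp_alg H\<^esub> grp_alg_map h H b"
proof (rule ga_eqI[where G=H])
  show "grp_alg_map h H (a \<oplus>\<^bsub>grp_alg G\<^esub> b) \<in> carrier (grp_alg H)"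
    by (rule map_closed) (simp add: add_closed[OF G.is_group] a b)
  show "grp_alg_map h H a \<oplus>\<^bsub>grp_alg H\<^esub> grp_alg_map h H b \<in> carrier (grp_alg H)"
    by (simp add: add_closed[OF H.is_group] map_closed a b)
  fix y assume y: "y \<in> carrier H"
  let ?S = "fsupp a \<union> fsupp b"
  have S: "finite ?S" using a b by (auto simp: ga_carrier)
  have ab: "a \<oplus>\<^bsub>grp_alg G\<^esub> b \<in> carrier (grp_alg G)" by (simp add: add_closed[OF G.is_group] a b)
  have "fsupp (a \<oplus>\<^bsub>grp_alg G\<^esub> b) \<subseteq> ?S" by (auto simp: fsupp_def ga_add)
  thus "grp_alg_map h H (a \<oplus>\<^bsub>grp_alg G\<^esub> b) y = (grp_alg_map h H a \<oplus>\<^bsub>grp_alg H\<^esub> grp_alg_map h H b) y"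
    using S y by (simp add: ga_add_apply map_apply[OF ab y S] map_apply[OF a y S] map_apply[OF b y S] sum.distrib)
qed

lemma map_sc:
  assumes a: "a \<in> carrier (grp_alg G :: ('a \<Rightarrow> 'k::field) ring)"
  shows "grp_alg_map h H (sc c a) = sc c (grp_alg_map h H a)"
proof (rule ext)
  fix y
  have "fsupp (sc c a) \<subseteq> fsupp a" by (auto simp: fsupp_def sc_apply)
  moreover have "sc c a \<in> carrier (grp_alg G)" by (rule sc_closed[OF G.is_group a])
  moreover have "finite (fsupp a)" using a by (simp add: ga_carrier)
  ultimately show "grp_alg_map h H (sc c a) y = sc c (grp_alg_map h H a) y"
  proof (cases "y \<in> carrier H")
    case True
    assume 1: "fsupp (sc c a) \<subseteq> fsupp a" "sc c a \<in> carrier (grp_alg G)" "finite (fsupp a)"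
    show ?thesis
      by (simp only: map_apply[OF 1(2) True 1(3) 1(1)] map_apply[OF a True 1(3) order.refl] sc_apply sum_distrib_left)
  qed (simp add: grp_alg_map_def sc_apply)
qed

lemma map_neg:
  assumes a: "a \<in> carrier (grp_alg G :: ('a \<Rightarrow> 'k::field) ring)"
  shows "grp_alg_map h H (\<ominus>\<^bsub>grp_alg G\<^esub> a) = \<ominus>\<^bsub>grp_alg H\<^esub> grp_alg_map h H a"
proof -
  have "\<ominus>\<^bsub>grp_alg G\<^esub> a = sc (-1) a" by (rule ext) (simp add: ga_neg[OF G.is_group a] sc_apply)
  moreover have "\<ominus>\<^bsub>grp_alg H\<^esub> grp_alg_map h H a = sc (-1) (grp_alg_map h H a)"
    by (rule ext) (simp add: ga_neg[OF H.is_group map_closed[OF a]] sc_apply)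
  ultimately show ?thesis by (simp add: map_sc a)
qed

lemma map_minus:
  assumes a: "a \<in> carrier (grp_alg G :: ('a \<Rightarrow> 'k::field) ring)" and b: "b \<in> carrier (grp_alg G)"
  shows "grp_alg_map h H (a \<ominus>\<^bsub>grp_alg G\<^esub> b) = grp_alg_map h H a \<ominus>\<^bsub>grp_alg H\<^esub> grp_alg_map h H b"
proof -
  interpret R: ring "grp_alg G :: ('a \<Rightarrow> 'k::field) ring" by (rule ring_ga[OF G.is_group])
  show ?thesis by (simp add: a_minus_def map_add map_neg a b)
qed

lemma map_elt:
  assumes g: "g \<in> carrier G"
  shows "grp_alg_map h H (grp_elt g :: 'a \<Rightarrow> 'k::field) = grp_elt (h g)"
proof (rule ext)
  fix y
  have e: "(grp_elt g :: 'a \<Rightarrow> 'k) \<in> carrier (grp_alg G)" by (rule elt_closed[OF G.is_group g])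
  show "grp_alg_map h H (grp_elt g :: 'a \<Rightarrow> 'k::field) y = grp_elt (h g) y"
  proof -
    have e2: "{x \<in> {g}. h x = y} = (if h g = y then {g} else {})" by auto
    show ?thesis unfolding grp_alg_map_def fsupp_elt[OF G.is_group] e2 using g hom_closed[OF g] by (cases "h g = y") (simp_all add: grp_elt_def)
  qed
qed

lemma map_one:
  "grp_alg_map h H (\<one>\<^bsub>grp_alg G :: ('a \<Rightarrow> 'k::field) ring\<^esub>) = \<one>\<^bsub>grp_alg H\<^esub>"
  by (simp add: ga_one map_elt)

end

context group_hom
begin

lemma map_supp:
  assumes a: "a \<in> carrier (grp_alg G :: ('a \<Rightarrow> 'k::field) ring)"
  shows "fsupp (grp_alg_map h H a) \<subseteq> h ` fsupp a"
proof
  fix y assume y: "y \<in> fsupp (grp_alg_map h H a)"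
  show "y \<in> h ` fsupp a"
  proof (rule ccontr)
    assume "y \<notin> h ` fsupp a"
    hence e: "{g \<in> fsupp a. h g = y} = {}" by auto
    have "grp_alg_map h H a y = 0" unfolding grp_alg_map_def e by simp
    thus False using y by (simp add: fsupp_def)
  qed
qed

lemma map_mult:
  assumes a: "a \<in> carrier (grp_alg G :: ('a \<Rightarrow> 'k::field) ring)" and b: "b \<in> carrier (grp_alg G)"
  shows "grp_alg_map h H (a \<otimes>\<^bsub>grp_alg G\<^esub> b) = grp_alg_map h H a \<otimes>\<^bsub>grp_alg H\<^esub> grp_alg_map h H b"
proof (rule ga_eqI[where G=H])
  have ab: "a \<otimes>\<^bsub>grp_alg G\<^esub> b \<in> carrier (grp_alg G)" by (simp add: mult_closed[OF G.is_group] a b)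
  show "grp_alg_map h H (a \<otimes>\<^bsub>grp_alg G\<^esub> b) \<in> carrier (grp_alg H)" by (rule map_closed[OF ab])
  show "grp_alg_map h H a \<otimes>\<^bsub>grp_alg H\<^esub> grp_alg_map h H b \<in> carrier (grp_alg H)"
    by (simp add: mult_closed[OF H.is_group] map_closed a b)
  fix y assume y: "y \<in> carrier H"
  define Sa where "Sa = fsupp a"
  define S where "S = (\<lambda>(x,z). x \<otimes> z) ` (fsupp a \<times> fsupp b)"
  have fa: "finite Sa" "Sa \<subseteq> carrier G" using a by (auto simp: ga_carrier Sa_def)
  have fb: "finite (fsupp b)" "fsupp b \<subseteq> carrier G" using b by (auto simp: ga_carrier)
  have fS: "finite S" "S \<subseteq> carrier G" using fa fb by (auto simp: S_def Sa_def)
  have inner: "(\<Sum>g\<in>{g\<in>S. h g = y}. b (inv k \<otimes> g)) = grp_alg_map h H b (inv\<^bsub>H\<^esub> h k \<otimes>\<^bsub>H\<^esub> y)"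
    if k: "k \<in> Sa" for k
  proof -
    have kc: "k \<in> carrier G" using k fa by auto
    let ?S' = "(\<lambda>g. inv k \<otimes> g) ` S"
    have sub: "fsupp b \<subseteq> ?S'"
    proof
      fix m assume m: "m \<in> fsupp b"
      hence "k \<otimes> m \<in> S" using k by (force simp: S_def Sa_def)
      moreover have "m = inv k \<otimes> (k \<otimes> m)"
      proof -
        have mc: "m \<in> carrier G" using m fb by auto
        thus ?thesis using kc by (simp add: m_assoc[symmetric])
      qed
      ultimately show "m \<in> ?S'" by blast
    qed
    have "grp_alg_map h H b (inv\<^bsub>H\<^esub> h k \<otimes>\<^bsub>H\<^esub> y) = (\<Sum>m\<in>{m\<in>?S'. h m = inv\<^bsub>H\<^esub> h k \<otimes>\<^bsub>H\<^esub> y}. b m)"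
      by (rule map_apply[OF b _ _ sub]) (use y kc fS in auto)
    also have "{m\<in>?S'. h m = inv\<^bsub>H\<^esub> h k \<otimes>\<^bsub>H\<^esub> y} = (\<lambda>g. inv k \<otimes> g) ` {g\<in>S. h g = y}"
    proof -
      have "h (inv k \<otimes> g) = inv\<^bsub>H\<^esub> h k \<otimes>\<^bsub>H\<^esub> y \<longleftrightarrow> h g = y" if "g \<in> S" for g
      proof -
        have gc: "g \<in> carrier G" using that fS by auto
        have "h (inv k \<otimes> g) = inv\<^bsub>H\<^esub> h k \<otimes>\<^bsub>H\<^esub> h g" using gc kc by simp
        moreover have "(inv\<^bsub>H\<^esub> h k \<otimes>\<^bsub>H\<^esub> h g = inv\<^bsub>H\<^esub> h k \<otimes>\<^bsub>H\<^esub> y) = (h g = y)"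
          using gc kc y by (simp add: H.l_cancel)
        ultimately show ?thesis by simp
      qed
      thus ?thesis by auto
    qed
    also have "(\<Sum>m\<in>(\<lambda>g. inv k \<otimes> g) ` {g\<in>S. h g = y}. b m) = (\<Sum>g\<in>{g\<in>S. h g = y}. b (inv k \<otimes> g))"
    proof (rule sum.reindex[unfolded comp_def])
      show "inj_on (\<lambda>g. inv k \<otimes> g) {g\<in>S. h g = y}"
      proof (rule inj_onI)
        fix u v assume u: "u \<in> {g\<in>S. h g = y}" and v: "v \<in> {g\<in>S. h g = y}" and e: "inv k \<otimes> u = inv k \<otimes> v"
        have "u \<in> carrier G" "v \<in> carrier G" using u v fS by auto
        thus "u = v" using e kc G.l_cancel[of "inv k" u v] by simp
      qed
    qed
    finally show ?thesis by simp
  qed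
  have "grp_alg_map h H (a \<otimes>\<^bsub>grp_alg G\<^esub> b) y = (\<Sum>g\<in>{g\<in>S. h g = y}. (a \<otimes>\<^bsub>grp_alg G\<^esub> b) g)"
    by (rule map_apply[OF ab y fS(1)]) (simp add: S_def mult_supp[OF G.is_group a b])
  also have "\<dots> = (\<Sum>g\<in>{g\<in>S. h g = y}. \<Sum>k\<in>Sa. a k * b (inv k \<otimes> g))"
    by (rule sum.cong[OF refl]) (use fS fa in \<open>auto simp: Sa_def intro: mult_apply[OF G.is_group a]\<close>)
  also have "\<dots> = (\<Sum>k\<in>Sa. a k * (\<Sum>g\<in>{g\<in>S. h g = y}. b (inv k \<otimes> g)))"
    by (subst sum.swap) (simp add: sum_distrib_left)
  also have "\<dots> = (\<Sum>k\<in>Sa. a k * grp_alg_map h H b (inv\<^bsub>H\<^esub> h k \<otimes>\<^bsub>H\<^esub> y))"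
    by (rule sum.cong[OF refl]) (simp add: inner)
  also have "\<dots> = (\<Sum>y'\<in>h ` Sa. \<Sum>k\<in>{k\<in>Sa. h k = y'}. a k * grp_alg_map h H b (inv\<^bsub>H\<^esub> h k \<otimes>\<^bsub>H\<^esub> y))"
    by (rule sum.image_gen[OF fa(1)])
  also have "\<dots> = (\<Sum>y'\<in>h ` Sa. grp_alg_map h H a y' * grp_alg_map h H b (inv\<^bsub>H\<^esub> y' \<otimes>\<^bsub>H\<^esub> y))"
  proof (rule sum.cong[OF refl])
    fix y' assume y': "y' \<in> h ` Sa"
    hence y'c: "y' \<in> carrier H" using fa by auto
    have "grp_alg_map h H a y' = (\<Sum>k\<in>{k\<in>Sa. h k = y'}. a k)"
      by (simp add: grp_alg_map_def y'c Sa_def)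
    thus "(\<Sum>k\<in>{k\<in>Sa. h k = y'}. a k * grp_alg_map h H b (inv\<^bsub>H\<^esub> h k \<otimes>\<^bsub>H\<^esub> y)) =
        grp_alg_map h H a y' * grp_alg_map h H b (inv\<^bsub>H\<^esub> y' \<otimes>\<^bsub>H\<^esub> y)"
      by (simp add: sum_distrib_right)
  qed
  also have "\<dots> = (grp_alg_map h H a \<otimes>\<^bsub>grp_alg H\<^esub> grp_alg_map h H b) y"
    by (rule mult_apply[OF H.is_group map_closed[OF a] y, symmetric]) (use fa map_supp[OF a] in \<open>auto simp: Sa_def\<close>)
  finally show "grp_alg_map h H (a \<otimes>\<^bsub>grp_alg G\<^esub> b) y = (grp_alg_map h H a \<otimes>\<^bsub>grp_alg H\<^esub> grp_alg_map h H b) y" .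
qed

lemma map_star:
  assumes a: "a \<in> carrier (grp_alg G :: ('a \<Rightarrow> 'k::field) ring)"
  shows "grp_alg_map h H (grp_star G a) = grp_star H (grp_alg_map h H a)"
proof (rule ga_eqI[where G=H])
  show "grp_alg_map h H (grp_star G a) \<in> carrier (grp_alg H)" by (rule map_closed[OF star_closed[OF G.is_group a]])
  show "grp_star H (grp_alg_map h H a) \<in> carrier (grp_alg H)" by (rule star_closed[OF H.is_group map_closed[OF a]])
  fix y assume y: "y \<in> carrier H"
  have fa: "finite (fsupp a)" "fsupp a \<subseteq> carrier G" using a by (auto simp: ga_carrier)
  let ?T = "(\<lambda>x. inv x) ` fsupp a"
  have sub: "fsupp (grp_star G a) \<subseteq> ?T"
  proof
    fix x assume "x \<in> fsupp (grp_star G a)"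
    hence x: "x \<in> carrier G" "a (inv x) \<noteq> 0" by (auto simp: fsupp_def star_apply split: if_splits)
    hence "inv x \<in> fsupp a" by (simp add: fsupp_def)
    moreover have "x = inv (inv x)" using x by simp
    ultimately show "x \<in> ?T" by blast
  qed
  have "grp_alg_map h H (grp_star G a) y = (\<Sum>g\<in>{g\<in>?T. h g = y}. grp_star G a g)"
    by (rule map_apply[OF star_closed[OF G.is_group a] y _ sub]) (use fa in auto)
  also have "{g\<in>?T. h g = y} = (\<lambda>x. inv x) ` {k\<in>fsupp a. h k = inv\<^bsub>H\<^esub> y}"
  proof -
    have "h (inv k) = y \<longleftrightarrow> h k = inv\<^bsub>H\<^esub> y" if "k \<in> fsupp a" for k
    proof -
      have kc: "k \<in> carrier G" using that fa by auto
      show ?thesis using kc y by (auto simp: H.inv_equality)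
    qed
    thus ?thesis by auto
  qed
  also have "(\<Sum>g\<in>(\<lambda>x. inv x) ` {k\<in>fsupp a. h k = inv\<^bsub>H\<^esub> y}. grp_star G a g) = (\<Sum>k\<in>{k\<in>fsupp a. h k = inv\<^bsub>H\<^esub> y}. a k)"
  proof -
    have "inj_on (\<lambda>x. inv x) {k\<in>fsupp a. h k = inv\<^bsub>H\<^esub> y}" using fa by (auto simp: inj_on_def)
    hence "(\<Sum>g\<in>(\<lambda>x. inv x) ` {k\<in>fsupp a. h k = inv\<^bsub>H\<^esub> y}. grp_star G a g) = (\<Sum>k\<in>{k\<in>fsupp a. h k = inv\<^bsub>H\<^esub> y}. grp_star G a (inv k))"
      by (simp add: sum.reindex)
    also have "\<dots> = (\<Sum>k\<in>{k\<in>fsupp a. h k = inv\<^bsub>H\<^esub> y}. a k)"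
      by (rule sum.cong[OF refl]) (use fa in \<open>auto simp: star_apply\<close>)
    finally show ?thesis .
  qed
  also have "\<dots> = grp_star H (grp_alg_map h H a) y"
    using y by (simp add: star_apply grp_alg_map_def)
  finally show "grp_alg_map h H (grp_star G a) y = grp_star H (grp_alg_map h H a) y" .
qed

lemma map_gsym:
  assumes a: "a \<in> carrier (grp_alg G :: ('a \<Rightarrow> 'k::field) ring)"
  shows "grp_alg_map h H (gsym G a) = gsym H (grp_alg_map h H a)"
  unfolding gsym_def
  by (simp add: map_sc add_closed[OF G.is_group] a star_closed[OF G.is_group] map_add map_star)

lemma map_surj:
  assumes surj: "h ` carrier G = carrier H"
    and z: "z \<in> carrier (grp_alg H :: ('c \<Rightarrow> 'k::field) ring)"
  shows "\<exists>x\<in>carrier (grp_alg G). grp_alg_map h H x = z"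
proof -
  define s where "s = inv_into (carrier G) h"
  have fz: "finite (fsupp z)" "fsupp z \<subseteq> carrier H" using z by (auto simp: ga_carrier)
  have s1: "y \<in> carrier H \<Longrightarrow> s y \<in> carrier G" for y unfolding s_def using surj by (metis inv_into_into)
  have s2: "y \<in> carrier H \<Longrightarrow> h (s y) = y" for y unfolding s_def using surj by (simp add: f_inv_into_f)
  define x where "x = (\<lambda>g. if g \<in> s ` fsupp z then z (h g) else 0)"
  have xc: "x \<in> carrier (grp_alg G)"
    by (rule ga_memI[of "s ` fsupp z"]) (use fz s1 in \<open>auto simp: x_def\<close>)
  have "grp_alg_map h H x = z"
  proof (rule ga_eqI[where G=H])
    show "grp_alg_map h H x \<in> carrier (grp_alg H)" by (rule map_closed[OF xc])
    show "z \<in> carrier (grp_alg H)" by (rule z)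
    fix y assume y: "y \<in> carrier H"
    have "grp_alg_map h H x y = (\<Sum>g\<in>{g\<in>s ` fsupp z. h g = y}. x g)"
      by (rule map_apply[OF xc y]) (use fz in \<open>auto simp: x_def fsupp_def\<close>)
    also have "{g\<in>s ` fsupp z. h g = y} = (if y \<in> fsupp z then {s y} else {})"
      using fz s2 by auto
    also have "(\<Sum>g\<in>(if y \<in> fsupp z then {s y} else {}). x g) = z y"
      using fz s2 y by (auto simp: x_def fsupp_def)
    finally show "grp_alg_map h H x y = z y" .
  qed
  thus ?thesis using xc by blast
qed

end

context group_hom
begin

lemma map_I:
  assumes i: "i \<in> (comm_ideal G :: ('a \<Rightarrow> 'k::field_char_0) set)"
  shows "grp_alg_map h H i \<in> comm_ideal H"
proof -
  interpret R: ring "grp_alg G :: ('a \<Rightarrow> 'k::field_char_0) ring" by (rule ring_ga[OF G.is_group])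
  interpret RH: ring "grp_alg H :: ('c \<Rightarrow> 'k::field_char_0) ring" by (rule ring_ga[OF H.is_group])
  interpret IH: ideal "comm_ideal H :: ('c \<Rightarrow> 'k::field_char_0) set" "grp_alg H" by (rule ideal_I[OF H.is_group])
  let ?Q = "{x \<in> carrier (grp_alg G :: ('a \<Rightarrow> 'k::field_char_0) ring). grp_alg_map h H x \<in> comm_ideal H}"
  have "ideal ?Q (grp_alg G)"
  proof (rule R.idealI')
    show "\<zero>\<^bsub>grp_alg G\<^esub> \<in> ?Q"
    proof -
      have "grp_alg_map h H (\<zero>\<^bsub>grp_alg G\<^esub> :: 'a \<Rightarrow> 'k) = \<zero>\<^bsub>grp_alg H\<^esub>"
        by (rule ext) (simp add: grp_alg_map_def ga_zero fsupp_def)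
      thus ?thesis by (simp add: IH.Izero)
    qed
  next
    fix a b :: "'a \<Rightarrow> 'k" assume "a \<in> ?Q" "b \<in> ?Q"
    thus "a \<oplus>\<^bsub>grp_alg G\<^esub> b \<in> ?Q" by (simp add: map_add IH.Iadd)
  next
    fix a :: "'a \<Rightarrow> 'k" assume "a \<in> ?Q"
    thus "\<ominus>\<^bsub>grp_alg G\<^esub> a \<in> ?Q" by (simp add: map_neg IH.Ineg)
  next
    fix a x :: "'a \<Rightarrow> 'k" assume "a \<in> ?Q" "x \<in> carrier (grp_alg G)"
    thus "x \<otimes>\<^bsub>grp_alg G\<^esub> a \<in> ?Q" "a \<otimes>\<^bsub>grp_alg G\<^esub> x \<in> ?Q"
      by (simp_all add: map_mult IH.I_l_closed IH.I_r_closed map_closed)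
  qed auto
  moreover have "{(a \<otimes>\<^bsub>grp_alg G\<^esub> b) \<ominus>\<^bsub>grp_alg G\<^esub> (b \<otimes>\<^bsub>grp_alg G\<^esub> a) | a b.
        a \<in> carrier (grp_alg G) \<and> b \<in> carrier (grp_alg G) \<and> grp_star G b = b} \<subseteq> ?Q"
  proof clarify
    fix a b :: "'a \<Rightarrow> 'k" assume a: "a \<in> carrier (grp_alg G)" and b: "b \<in> carrier (grp_alg G)" and bs: "grp_star G b = b"
    have "grp_star H (grp_alg_map h H b) = grp_alg_map h H b" using map_star[OF b] bs by simp
    hence "grp_alg_map h H a \<otimes>\<^bsub>grp_alg H\<^esub> grp_alg_map h H b \<ominus>\<^bsub>grp_alg H\<^esub> grp_alg_map h H b \<otimes>\<^bsub>grp_alg H\<^esub> grp_alg_map h H a \<in> comm_ideal H"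
      by (intro gen_I[OF H.is_group] map_closed a b)
    thus "a \<otimes>\<^bsub>grp_alg G\<^esub> b \<ominus>\<^bsub>grp_alg G\<^esub> b \<otimes>\<^bsub>grp_alg G\<^esub> a \<in> carrier (grp_alg G) \<and>
         grp_alg_map h H (a \<otimes>\<^bsub>grp_alg G\<^esub> b \<ominus>\<^bsub>grp_alg G\<^esub> b \<otimes>\<^bsub>grp_alg G\<^esub> a) \<in> comm_ideal H"
      using a b by (simp add: map_minus map_mult)
  qed
  ultimately have "comm_ideal G \<subseteq> ?Q" unfolding comm_ideal_def by (rule R.genideal_minimal)
  thus ?thesis using i by blast
qed

lemma A_map_cls:
  assumes x: "x \<in> carrier (grp_alg G :: ('a \<Rightarrow> 'k::field_char_0) ring)"
  shows "(A_map h G H (A_cls G x) :: ('c \<Rightarrow> 'k) set) = A_cls H (grp_alg_map h H x)"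
proof -
  let ?r = "SOME y. y \<in> A_cls G x"
  have r: "?r \<in> carrier (grp_alg G :: ('a \<Rightarrow> 'k::field_char_0) ring)" "A_cls G ?r = A_cls G x"
    using A_some[OF G.is_group A_cls_closed[OF G.is_group x]] by auto
  have "?r \<ominus>\<^bsub>grp_alg G\<^esub> x \<in> comm_ideal G" using r A_eq[OF G.is_group r(1) x] by simp
  hence "grp_alg_map h H (?r \<ominus>\<^bsub>grp_alg G\<^esub> x) \<in> comm_ideal H" by (rule map_I)
  hence "grp_alg_map h H ?r \<ominus>\<^bsub>grp_alg H\<^esub> grp_alg_map h H x \<in> comm_ideal H" by (simp add: map_minus r x)
  hence "A_cls H (grp_alg_map h H ?r) = A_cls H (grp_alg_map h H x)"
    using A_eq[OF H.is_group] map_closed r x by blast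
  thus ?thesis unfolding A_map_def by simp
qed

lemma kerI:
  assumes x: "x \<in> carrier (grp_alg G :: ('a \<Rightarrow> 'k::field_char_0) ring)"
    and s: "grp_star G x \<ominus>\<^bsub>grp_alg G\<^esub> x \<in> comm_ideal G"
    and m: "grp_alg_map h H x \<in> comm_ideal H"
  shows "A_cls G x \<in> sharp_kernel h G H"
proof -
  have z: "\<zero>\<^bsub>A_alg H\<^esub> = (comm_ideal H :: ('c \<Rightarrow> 'k) set)" by (rule A_zero[OF H.is_group])
  show ?thesis unfolding sharp_kernel_def
    using sharp_cls[OF G.is_group x s] A_map_cls[OF x] z A_zero_iff[OF H.is_group map_closed[OF x]] m
    by simp
qed

lemma kerD:
  assumes U: "U \<in> (sharp_kernel h G H :: ('a \<Rightarrow> 'k::field_char_0) set set)"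
  shows "\<exists>x\<in>carrier (grp_alg G). U = A_cls G x \<and> grp_star G x = x \<and> grp_alg_map h H x \<in> comm_ideal H"
proof -
  have U1: "U \<in> sharp G" and U2: "(A_map h G H U :: ('c \<Rightarrow> 'k) set) = \<zero>\<^bsub>A_alg H\<^esub>" using U by (auto simp: sharp_kernel_def)
  obtain x where x: "x \<in> carrier (grp_alg G)" "U = A_cls G x" "grp_star G x = x" using sharp_rep[OF G.is_group U1] by blast
  have z: "\<zero>\<^bsub>A_alg H\<^esub> = (comm_ideal H :: ('c \<Rightarrow> 'k) set)" by (rule A_zero[OF H.is_group])
  have "A_cls H (grp_alg_map h H x) = comm_ideal H" using U2 x A_map_cls[OF x(1)] z by simp
  hence "grp_alg_map h H x \<in> comm_ideal H" using A_zero_iff[OF H.is_group map_closed[OF x(1)]] by simp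
  thus ?thesis using x by blast
qed

lemma ker_ideal: "ideal (sharp_kernel h G H :: ('a \<Rightarrow> 'k::field_char_0) set set) (sharp_ring G)"
proof -
  interpret R: ring "grp_alg G :: ('a \<Rightarrow> 'k::field_char_0) ring" by (rule ring_ga[OF G.is_group])
  interpret RH: ring "grp_alg H :: ('c \<Rightarrow> 'k::field_char_0) ring" by (rule ring_ga[OF H.is_group])
  interpret IH: ideal "comm_ideal H :: ('c \<Rightarrow> 'k::field_char_0) set" "grp_alg H" by (rule ideal_I[OF H.is_group])
  interpret IG: ideal "comm_ideal G :: ('a \<Rightarrow> 'k::field_char_0) set" "grp_alg G" by (rule ideal_I[OF G.is_group])
  interpret S: ring "sharp_ring G :: ('a \<Rightarrow> 'k::field_char_0) set ring" by (rule ring_sharp[OF G.is_group])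
  have symI: "grp_star G x \<ominus>\<^bsub>grp_alg G\<^esub> x \<in> comm_ideal G" if "x \<in> carrier (grp_alg G)" "grp_star G x = x" for x :: "'a \<Rightarrow> 'k"
    using that by (simp add: a_minus_def R.r_neg IG.Izero)
  have selfI: "z \<ominus>\<^bsub>grp_alg G\<^esub> z \<in> comm_ideal G" if "z \<in> carrier (grp_alg G)" for z :: "'a \<Rightarrow> 'k"
    using that by (simp add: a_minus_def R.r_neg IG.Izero)
  show ?thesis
  proof (rule S.idealI')
    show "sharp_kernel h G H \<subseteq> carrier (sharp_ring G)" by (auto simp: sharp_kernel_def sharp_ring_simps)
  next
    show "\<zero>\<^bsub>sharp_ring G\<^esub> \<in> (sharp_kernel h G H :: ('a \<Rightarrow> 'k::field_char_0) set set)"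
    proof -
      have "A_cls G \<zero>\<^bsub>grp_alg G\<^esub> \<in> (sharp_kernel h G H :: ('a \<Rightarrow> 'k::field_char_0) set set)"
      proof (rule kerI[OF R.zero_closed])
        have st0: "grp_star G \<zero>\<^bsub>grp_alg G\<^esub> = (\<zero>\<^bsub>grp_alg G\<^esub> :: 'a \<Rightarrow> 'k)" by (rule ext) (simp add: star_apply ga_zero)
        show "grp_star G \<zero>\<^bsub>grp_alg G\<^esub> \<ominus>\<^bsub>grp_alg G\<^esub> (\<zero>\<^bsub>grp_alg G\<^esub> :: 'a \<Rightarrow> 'k) \<in> comm_ideal G"
          by (rule symI[OF R.zero_closed st0])
        show "grp_alg_map h H (\<zero>\<^bsub>grp_alg G\<^esub> :: 'a \<Rightarrow> 'k) \<in> comm_ideal H" by (rule map_I[OF IG.Izero])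
      qed
      moreover have "A_cls G (\<zero>\<^bsub>grp_alg G\<^esub> :: 'a \<Rightarrow> 'k) = \<zero>\<^bsub>A_alg G\<^esub>"
      proof -
        have z: "\<zero>\<^bsub>A_alg G\<^esub> = (comm_ideal G :: ('a \<Rightarrow> 'k) set)" by (rule A_zero[OF G.is_group])
        show ?thesis using A_zero_iff[OF G.is_group R.zero_closed] z by (simp add: IG.Izero)
      qed
      ultimately show ?thesis by (simp add: sharp_ring_simps)
    qed
  next
    fix a b :: "('a \<Rightarrow> 'k) set" assume a: "a \<in> sharp_kernel h G H" and b: "b \<in> sharp_kernel h G H"
    obtain x where x: "x\<in>carrier (grp_alg G)" "a = A_cls G x" "grp_star G x = x" "grp_alg_map h H x \<in> comm_ideal H" using kerD[OF a] by blast
    obtain y where y: "y\<in>carrier (grp_alg G)" "b = A_cls G y" "grp_star G y = y" "grp_alg_map h H y \<in> comm_ideal H" using kerD[OF b] by blast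
    have "A_cls G (x \<oplus>\<^bsub>grp_alg G\<^esub> y) \<in> sharp_kernel h G H"
      by (rule kerI) (use x y in \<open>simp_all add: selfI R.a_closed star_add[OF G.is_group] map_add IH.Iadd\<close>)
    thus "a \<oplus>\<^bsub>sharp_ring G\<^esub> b \<in> sharp_kernel h G H" using x y by (simp add: sharp_ring_simps A_add[OF G.is_group])
  next
    fix a :: "('a \<Rightarrow> 'k) set" assume a: "a \<in> sharp_kernel h G H"
    obtain x where x: "x\<in>carrier (grp_alg G)" "a = A_cls G x" "grp_star G x = x" "grp_alg_map h H x \<in> comm_ideal H" using kerD[OF a] by blast
    have as: "a \<in> sharp G" using a by (simp add: sharp_kernel_def)
    have "A_cls G (\<ominus>\<^bsub>grp_alg G\<^esub> x) \<in> sharp_kernel h G H"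
      by (rule kerI) (use x in \<open>simp_all add: selfI R.a_inv_closed star_neg[OF G.is_group] map_neg IH.Ineg\<close>)
    thus "\<ominus>\<^bsub>sharp_ring G\<^esub> a \<in> sharp_kernel h G H" by (subst sharp_ring_neg[OF G.is_group as]) (simp add: x A_neg[OF G.is_group])
  next
    fix a b :: "('a \<Rightarrow> 'k) set" assume a: "a \<in> sharp_kernel h G H" and b: "b \<in> carrier (sharp_ring G)"
    obtain x where x: "x\<in>carrier (grp_alg G)" "a = A_cls G x" "grp_star G x = x" "grp_alg_map h H x \<in> comm_ideal H" using kerD[OF a] by blast
    obtain y where y: "y\<in>carrier (grp_alg G)" "b = A_cls G y" "grp_star G y = y" using sharp_rep[OF G.is_group, of b] b by (auto simp: sharp_ring_simps)
    have xy1: "grp_star G (x \<otimes>\<^bsub>grp_alg G\<^esub> y) \<ominus>\<^bsub>grp_alg G\<^esub> x \<otimes>\<^bsub>grp_alg G\<^esub> y \<in> comm_ideal G"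
      using gen_I[OF G.is_group y(1) x(1) x(3)] by (simp add: star_mult[OF G.is_group] x y)
    have xy2: "grp_star G (y \<otimes>\<^bsub>grp_alg G\<^esub> x) \<ominus>\<^bsub>grp_alg G\<^esub> y \<otimes>\<^bsub>grp_alg G\<^esub> x \<in> comm_ideal G"
      using gen_I[OF G.is_group x(1) y(1) y(3)] by (simp add: star_mult[OF G.is_group] x y)
    have "A_cls G (y \<otimes>\<^bsub>grp_alg G\<^esub> x) \<in> sharp_kernel h G H"
      by (rule kerI) (use x y xy2 in \<open>simp_all add: map_mult IH.I_l_closed map_closed\<close>)
    thus "b \<otimes>\<^bsub>sharp_ring G\<^esub> a \<in> sharp_kernel h G H" using x y by (simp add: sharp_ring_simps A_mult[OF G.is_group])
    have "A_cls G (x \<otimes>\<^bsub>grp_alg G\<^esub> y) \<in> sharp_kernel h G H"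
      by (rule kerI) (use x y xy1 in \<open>simp_all add: map_mult IH.I_r_closed map_closed\<close>)
    thus "a \<otimes>\<^bsub>sharp_ring G\<^esub> b \<in> sharp_kernel h G H" using x y by (simp add: sharp_ring_simps A_mult[OF G.is_group])
  qed
qed

end

context group_hom
begin

lemma gens_ker:
  assumes Lk: "L \<subseteq> kernel G H h"
    and U: "U \<in> carrier (A_alg G :: ('a \<Rightarrow> 'k::field_char_0) set ring)" and l: "l \<in> L"
  shows "A_bar G (U \<otimes>\<^bsub>A_alg G\<^esub> A_cls G (grp_elt l)) \<ominus>\<^bsub>A_alg G\<^esub> A_bar G U \<in> sharp_kernel h G H"
proof -
  interpret R: ring "grp_alg G :: ('a \<Rightarrow> 'k::field_char_0) ring" by (rule ring_ga[OF G.is_group])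
  interpret RH: ring "grp_alg H :: ('c \<Rightarrow> 'k::field_char_0) ring" by (rule ring_ga[OF H.is_group])
  interpret IH: ideal "comm_ideal H :: ('c \<Rightarrow> 'k::field_char_0) set" "grp_alg H" by (rule ideal_I[OF H.is_group])
  interpret IG: ideal "comm_ideal G :: ('a \<Rightarrow> 'k::field_char_0) set" "grp_alg G" by (rule ideal_I[OF G.is_group])
  have lk: "l \<in> carrier G" "h l = \<one>\<^bsub>H\<^esub>" using Lk l by (auto simp: kernel_def)
  obtain x where x: "x \<in> carrier (grp_alg G)" "U = A_cls G x" using A_some[OF G.is_group U] by blast
  have el: "(grp_elt l :: 'a \<Rightarrow> 'k) \<in> carrier (grp_alg G)" by (rule elt_closed[OF G.is_group lk(1)])
  have xl: "x \<otimes>\<^bsub>grp_alg G\<^esub> grp_elt l \<in> carrier (grp_alg G)" using x el by simp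
  define z where "z = gsym G (x \<otimes>\<^bsub>grp_alg G\<^esub> grp_elt l) \<ominus>\<^bsub>grp_alg G\<^esub> gsym G x"
  have zc: "z \<in> carrier (grp_alg G)" unfolding z_def by (intro R.minus_closed gsym_closed[OF G.is_group] x xl)
  have eq: "A_bar G (U \<otimes>\<^bsub>A_alg G\<^esub> A_cls G (grp_elt l)) \<ominus>\<^bsub>A_alg G\<^esub> A_bar G U = A_cls G z"
    unfolding z_def x(2)
    by (simp add: A_mult[OF G.is_group] x el A_bar_cls[OF G.is_group] xl A_minus[OF G.is_group] gsym_closed[OF G.is_group])
  have sz: "grp_star G z = z"
    unfolding z_def by (simp add: star_minus[OF G.is_group] gsym_closed[OF G.is_group] x xl star_gsym[OF G.is_group])
  have "grp_alg_map h H z = gsym H (grp_alg_map h H x) \<ominus>\<^bsub>grp_alg H\<^esub> gsym H (grp_alg_map h H x)"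
  proof -
    have "grp_alg_map h H (x \<otimes>\<^bsub>grp_alg G\<^esub> grp_elt l) = grp_alg_map h H x"
      by (simp add: map_mult x el map_elt lk ga_one[symmetric] map_closed)
    thus ?thesis unfolding z_def
      by (simp add: map_minus gsym_closed[OF G.is_group] x xl map_gsym)
  qed
  hence m1: "grp_alg_map h H z \<in> comm_ideal H" using gsym_closed[OF H.is_group map_closed[OF x(1)]] by (simp add: a_minus_def RH.r_neg IH.Izero)
  have s1: "grp_star G z \<ominus>\<^bsub>grp_alg G\<^esub> z \<in> comm_ideal G" using sz zc by (simp add: a_minus_def R.r_neg IG.Izero)
  show ?thesis unfolding eq by (rule kerI[OF zc s1 m1])
qed

lemma sharp_ideal_sub:
  assumes Lk: "L \<subseteq> kernel G H h"
  shows "(sharp_ideal G L :: ('a \<Rightarrow> 'k::field_char_0) set set) \<subseteq> sharp_kernel h G H"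
proof -
  interpret S: ring "sharp_ring G :: ('a \<Rightarrow> 'k::field_char_0) set ring" by (rule ring_sharp[OF G.is_group])
  show ?thesis unfolding sharp_ideal_def
    by (rule S.genideal_minimal[OF ker_ideal]) (use gens_ker[OF Lk] in blast)
qed

end

locale main_ctx = group_hom G H h for G (structure) and H (structure) and h +
  fixes L :: "'a set" and J :: "('a \<Rightarrow> 'k::field_char_0) set set"
  assumes surj: "h ` carrier G = carrier H"
    and Lker: "L \<subseteq> kernel G H h"
    and ncl: "normal_closure G L = kernel G H h"
    and Jid: "ideal J (sharp_ring G)"
    and SJ: "{A_bar G (U \<otimes>\<^bsub>A_alg G\<^esub> A_cls G (grp_elt l)) \<ominus>\<^bsub>A_alg G\<^esub> A_bar G U | U l.
        U \<in> carrier (A_alg G) \<and> l \<in> L} \<subseteq> J"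
begin

sublocale R: ring "grp_alg G :: ('a \<Rightarrow> 'k) ring" by (rule ring_ga[OF G.is_group])
sublocale IG: ideal "comm_ideal G :: ('a \<Rightarrow> 'k) set" "grp_alg G" by (rule ideal_I[OF G.is_group])
sublocale RH: ring "grp_alg H :: ('c \<Rightarrow> 'k) ring" by (rule ring_ga[OF H.is_group])
sublocale IH: ideal "comm_ideal H :: ('c \<Rightarrow> 'k) set" "grp_alg H" by (rule ideal_I[OF H.is_group])
sublocale JI: ideal J "sharp_ring G" by (rule Jid)

lemma SR: "carrier (sharp_ring G) = (sharp G :: ('a\<Rightarrow>'k) set set)"
  "\<And>U V. U \<oplus>\<^bsub>sharp_ring G\<^esub> V = (U \<oplus>\<^bsub>A_alg G\<^esub> V :: ('a \<Rightarrow> 'k) set)"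
  "\<And>U V. U \<otimes>\<^bsub>sharp_ring G\<^esub> V = (U \<otimes>\<^bsub>A_alg G\<^esub> V :: ('a \<Rightarrow> 'k) set)"
  "\<zero>\<^bsub>sharp_ring G\<^esub> = (\<zero>\<^bsub>A_alg G\<^esub> :: ('a\<Rightarrow>'k) set)"
  by (simp_all add: sharp_ring_def)

lemma J_sub: "u \<in> J \<Longrightarrow> u \<in> sharp G"
  using JI.Icarr SR(1) by blast

lemma J_add: "u \<in> J \<Longrightarrow> v \<in> J \<Longrightarrow> u \<oplus>\<^bsub>A_alg G\<^esub> v \<in> J"
  using JI.Iadd[of u v] SR(2)[of u v] by simp

lemma J_zero: "\<zero>\<^bsub>A_alg G\<^esub> \<in> J"
  using JI.Izero SR(4) by simp

lemma J_rmult: "u \<in> J \<Longrightarrow> v \<in> sharp G \<Longrightarrow> u \<otimes>\<^bsub>A_alg G\<^esub> v \<in> J"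
  using JI.I_r_closed[of u v] SR(1) SR(3)[of u v] by simp

lemma Az: "\<zero>\<^bsub>A_alg G\<^esub> = (comm_ideal G :: ('a \<Rightarrow> 'k) set)" by (rule A_zero[OF G.is_group])

definition P where "P = {x \<in> carrier (grp_alg G :: ('a \<Rightarrow> 'k) ring). A_cls G (gsym G x) \<in> J}"

lemma P_carr: "x \<in> P \<Longrightarrow> x \<in> carrier (grp_alg G)" by (simp add: P_def)

lemma P_add: "x \<in> P \<Longrightarrow> y \<in> P \<Longrightarrow> x \<oplus>\<^bsub>grp_alg G\<^esub> y \<in> P"
  unfolding P_def
  by (auto simp: gsym_add[OF G.is_group] A_add[OF G.is_group, symmetric] gsym_closed[OF G.is_group] intro: J_add)

lemma P_neg: assumes x: "x \<in> P" shows "\<ominus>\<^bsub>grp_alg G\<^esub> x \<in> P"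
proof -
  have xc: "x \<in> carrier (grp_alg G)" and xJ: "A_cls G (gsym G x) \<in> J" using x by (auto simp: P_def)
  have gx: "gsym G x \<in> carrier (grp_alg G)" by (rule gsym_closed[OF G.is_group xc])
  have m1: "\<ominus>\<^bsub>grp_alg G\<^esub> \<one>\<^bsub>grp_alg G\<^esub> \<in> carrier (grp_alg G :: ('a \<Rightarrow> 'k) ring)" by simp
  have "grp_star G (\<ominus>\<^bsub>grp_alg G\<^esub> \<one>\<^bsub>grp_alg G\<^esub>) = (\<ominus>\<^bsub>grp_alg G\<^esub> \<one>\<^bsub>grp_alg G\<^esub> :: 'a \<Rightarrow> 'k)"
  proof -
    have "grp_star G (\<one>\<^bsub>grp_alg G\<^esub>) = (\<one>\<^bsub>grp_alg G\<^esub> :: 'a \<Rightarrow> 'k)"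
      by (simp add: ga_one star_elt[OF G.is_group])
    thus ?thesis by (simp add: star_neg[OF G.is_group R.one_closed])
  qed
  hence s1: "A_cls G (\<ominus>\<^bsub>grp_alg G\<^esub> \<one>\<^bsub>grp_alg G\<^esub> :: 'a \<Rightarrow> 'k) \<in> sharp G"
    by (rule sharp_cls_sym[OF G.is_group m1])
  have "A_cls G (gsym G x) \<otimes>\<^bsub>A_alg G\<^esub> A_cls G (\<ominus>\<^bsub>grp_alg G\<^esub> \<one>\<^bsub>grp_alg G\<^esub>) \<in> J"
    by (rule J_rmult[OF xJ s1])
  moreover have "A_cls G (gsym G x) \<otimes>\<^bsub>A_alg G\<^esub> A_cls G (\<ominus>\<^bsub>grp_alg G\<^esub> \<one>\<^bsub>grp_alg G\<^esub>) = A_cls G (gsym G (\<ominus>\<^bsub>grp_alg G\<^esub> x))"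
    by (simp add: A_mult[OF G.is_group] gx gsym_neg[OF G.is_group xc] R.r_minus)
  ultimately show ?thesis using xc by (simp add: P_def)
qed

lemma P_I: assumes i: "i \<in> comm_ideal G" shows "i \<in> P"
proof -
  have ic: "i \<in> carrier (grp_alg G)" using i by simp
  have "A_cls G (gsym G i) = \<zero>\<^bsub>A_alg G\<^esub>"
    using A_zero_iff[OF G.is_group gsym_closed[OF G.is_group ic]] gsym_I[OF G.is_group i] Az by simp
  thus ?thesis using ic J_zero by (simp add: P_def)
qed

lemma P_trace:
  assumes x: "x \<in> carrier (grp_alg G)" and y: "y \<in> carrier (grp_alg G)" and yx: "y \<otimes>\<^bsub>grp_alg G\<^esub> x \<in> P"
  shows "x \<otimes>\<^bsub>grp_alg G\<^esub> y \<in> P"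
proof -
  have "A_cls G (gsym G (x \<otimes>\<^bsub>grp_alg G\<^esub> y)) = A_cls G (gsym G (y \<otimes>\<^bsub>grp_alg G\<^esub> x))"
    using A_eq[OF G.is_group gsym_closed[OF G.is_group R.m_closed[OF x y]] gsym_closed[OF G.is_group R.m_closed[OF y x]]] trace_I[OF G.is_group x y] by simp
  thus ?thesis using yx x y by (simp add: P_def)
qed

lemma P_gen:
  assumes u: "u \<in> carrier (grp_alg G)" and l: "l \<in> L"
  shows "u \<otimes>\<^bsub>grp_alg G\<^esub> (grp_elt l \<ominus>\<^bsub>grp_alg G\<^esub> \<one>\<^bsub>grp_alg G\<^esub>) \<in> P"
proof -
  have lc: "l \<in> carrier G" using l Lker by (auto simp: kernel_def)
  have el: "(grp_elt l :: 'a \<Rightarrow> 'k) \<in> carrier (grp_alg G)" by (rule elt_closed[OF G.is_group lc])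
  have ul: "u \<otimes>\<^bsub>grp_alg G\<^esub> grp_elt l \<in> carrier (grp_alg G)" using u el by simp
  have "A_bar G (A_cls G u \<otimes>\<^bsub>A_alg G\<^esub> A_cls G (grp_elt l)) \<ominus>\<^bsub>A_alg G\<^esub> A_bar G (A_cls G u) \<in> J"
    using SJ A_cls_closed[OF G.is_group u] l by blast
  moreover have "A_bar G (A_cls G u \<otimes>\<^bsub>A_alg G\<^esub> A_cls G (grp_elt l)) \<ominus>\<^bsub>A_alg G\<^esub> A_bar G (A_cls G u)
      = A_cls G (gsym G (u \<otimes>\<^bsub>grp_alg G\<^esub> (grp_elt l \<ominus>\<^bsub>grp_alg G\<^esub> \<one>\<^bsub>grp_alg G\<^esub>)))"
  proof -
    have "A_cls G u \<otimes>\<^bsub>A_alg G\<^esub> A_cls G (grp_elt l) = A_cls G (u \<otimes>\<^bsub>grp_alg G\<^esub> grp_elt l)"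
      by (rule A_mult[OF G.is_group u el])
    moreover have "A_bar G (A_cls G (u \<otimes>\<^bsub>grp_alg G\<^esub> grp_elt l)) = A_cls G (gsym G (u \<otimes>\<^bsub>grp_alg G\<^esub> grp_elt l))"
      by (rule A_bar_cls[OF G.is_group ul])
    moreover have "A_bar G (A_cls G u) = A_cls G (gsym G u)" by (rule A_bar_cls[OF G.is_group u])
    moreover have "A_cls G (gsym G (u \<otimes>\<^bsub>grp_alg G\<^esub> grp_elt l)) \<ominus>\<^bsub>A_alg G\<^esub> A_cls G (gsym G u)
       = A_cls G (gsym G (u \<otimes>\<^bsub>grp_alg G\<^esub> grp_elt l) \<ominus>\<^bsub>grp_alg G\<^esub> gsym G u)"
      by (rule A_minus[OF G.is_group gsym_closed[OF G.is_group ul] gsym_closed[OF G.is_group u]])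
    moreover have "gsym G (u \<otimes>\<^bsub>grp_alg G\<^esub> grp_elt l) \<ominus>\<^bsub>grp_alg G\<^esub> gsym G u = gsym G (u \<otimes>\<^bsub>grp_alg G\<^esub> grp_elt l \<ominus>\<^bsub>grp_alg G\<^esub> u)"
      by (rule gsym_minus[OF G.is_group ul u, symmetric])
    moreover have "u \<otimes>\<^bsub>grp_alg G\<^esub> grp_elt l \<ominus>\<^bsub>grp_alg G\<^esub> u = u \<otimes>\<^bsub>grp_alg G\<^esub> (grp_elt l \<ominus>\<^bsub>grp_alg G\<^esub> \<one>\<^bsub>grp_alg G\<^esub>)"
      using u el by (simp add: a_minus_def R.r_distr R.r_minus)
    ultimately show ?thesis by simp
  qed
  ultimately show ?thesis using u el by (simp add: P_def)
qed

definition P' where "P' = {x \<in> carrier (grp_alg G :: ('a \<Rightarrow> 'k) ring). \<forall>a\<in>carrier (grp_alg G). \<forall>b\<in>carrier (grp_alg G).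
   a \<otimes>\<^bsub>grp_alg G\<^esub> x \<otimes>\<^bsub>grp_alg G\<^esub> b \<in> P}"

lemma P'_carr: "x \<in> P' \<Longrightarrow> x \<in> carrier (grp_alg G)" by (simp add: P'_def)

lemma P'_P: "x \<in> P' \<Longrightarrow> x \<in> P"
  unfolding P'_def using R.one_closed by (metis (no_types, lifting) R.l_one R.r_one R.m_closed mem_Collect_eq)

lemma P'_add: "x \<in> P' \<Longrightarrow> y \<in> P' \<Longrightarrow> x \<oplus>\<^bsub>grp_alg G\<^esub> y \<in> P'"
  unfolding P'_def by (auto simp: R.r_distr R.l_distr intro!: P_add)

lemma P'_neg: "x \<in> P' \<Longrightarrow> \<ominus>\<^bsub>grp_alg G\<^esub> x \<in> P'"
  unfolding P'_def by (auto simp: R.r_minus R.l_minus intro!: P_neg)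

lemma P'_lmult: "x \<in> P' \<Longrightarrow> c \<in> carrier (grp_alg G) \<Longrightarrow> c \<otimes>\<^bsub>grp_alg G\<^esub> x \<in> P'"
  unfolding P'_def by (auto simp: R.m_assoc[symmetric])

lemma P'_rmult: "x \<in> P' \<Longrightarrow> c \<in> carrier (grp_alg G) \<Longrightarrow> x \<otimes>\<^bsub>grp_alg G\<^esub> c \<in> P'"
  unfolding P'_def by (auto simp: R.m_assoc)

lemma P'_I: assumes i: "i \<in> comm_ideal G" shows "i \<in> P'"
  unfolding P'_def
proof (intro CollectI conjI ballI)
  show "i \<in> carrier (grp_alg G)" using i by simp
  fix a b assume a: "a \<in> carrier (grp_alg G :: ('a \<Rightarrow> 'k) ring)" and b: "b \<in> carrier (grp_alg G :: ('a \<Rightarrow> 'k) ring)"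
  show "a \<otimes>\<^bsub>grp_alg G\<^esub> i \<otimes>\<^bsub>grp_alg G\<^esub> b \<in> P"
    by (rule P_I, rule IG.I_r_closed[OF IG.I_l_closed[OF i a] b])
qed

lemma P'_L:
  assumes l: "l \<in> L" shows "grp_elt l \<ominus>\<^bsub>grp_alg G\<^esub> \<one>\<^bsub>grp_alg G\<^esub> \<in> P'"
proof -
  have lc: "l \<in> carrier G" using l Lker by (auto simp: kernel_def)
  have el: "(grp_elt l :: 'a \<Rightarrow> 'k) \<in> carrier (grp_alg G)" by (rule elt_closed[OF G.is_group lc])
  show ?thesis unfolding P'_def
  proof (intro CollectI conjI ballI)
    show "grp_elt l \<ominus>\<^bsub>grp_alg G\<^esub> \<one>\<^bsub>grp_alg G\<^esub> \<in> carrier (grp_alg G :: ('a \<Rightarrow> 'k) ring)" using el by simp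
    fix a b assume a: "a \<in> carrier (grp_alg G :: ('a \<Rightarrow> 'k) ring)" and b: "b \<in> carrier (grp_alg G :: ('a \<Rightarrow> 'k) ring)"
    have "(b \<otimes>\<^bsub>grp_alg G\<^esub> a) \<otimes>\<^bsub>grp_alg G\<^esub> (grp_elt l \<ominus>\<^bsub>grp_alg G\<^esub> \<one>\<^bsub>grp_alg G\<^esub>) \<in> P"
      by (rule P_gen[OF _ l]) (use a b in simp)
    hence "b \<otimes>\<^bsub>grp_alg G\<^esub> (a \<otimes>\<^bsub>grp_alg G\<^esub> (grp_elt l \<ominus>\<^bsub>grp_alg G\<^esub> \<one>\<^bsub>grp_alg G\<^esub>)) \<in> P"
      using a b el by (simp add: R.m_assoc)
    hence "(a \<otimes>\<^bsub>grp_alg G\<^esub> (grp_elt l \<ominus>\<^bsub>grp_alg G\<^esub> \<one>\<^bsub>grp_alg G\<^esub>)) \<otimes>\<^bsub>grp_alg G\<^esub> b \<in> P"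
      by (rule P_trace[rotated 2]) (use a b el in simp_all)
    thus "a \<otimes>\<^bsub>grp_alg G\<^esub> (grp_elt l \<ominus>\<^bsub>grp_alg G\<^esub> \<one>\<^bsub>grp_alg G\<^esub>) \<otimes>\<^bsub>grp_alg G\<^esub> b \<in> P" .
  qed
qed

end

lemma (in ring) id_lmd: "u \<in> carrier R \<Longrightarrow> e \<in> carrier R \<Longrightarrow> u \<otimes> (e \<ominus> \<one>) = u \<otimes> e \<ominus> u"
  by (simp add: a_minus_def r_distr r_minus)
lemma (in ring) id_mult: "A \<in> carrier R \<Longrightarrow> B \<in> carrier R \<Longrightarrow> A\<otimes>B \<ominus> \<one> = A\<otimes>(B \<ominus> \<one>) \<oplus> (A \<ominus> \<one>)"
  by (simp add: id_lmd) algebra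
lemma (in ring) id_inv1: "A \<in> carrier R \<Longrightarrow> B \<in> carrier R \<Longrightarrow> \<ominus>(B\<otimes>(A \<ominus> \<one>)) = B \<ominus> B\<otimes>A"
  by (simp add: id_lmd) algebra
lemma (in ring) id_conj: "B \<in> carrier R \<Longrightarrow> C \<in> carrier R \<Longrightarrow> D \<in> carrier R \<Longrightarrow> C\<otimes>(B \<ominus> \<one>)\<otimes>D = C\<otimes>B\<otimes>D \<ominus> C\<otimes>D"
  by algebra
lemma (in ring) id_addback: "x \<in> carrier R \<Longrightarrow> d \<in> carrier R \<Longrightarrow> (x \<ominus> d) \<oplus> d = x"
  by algebra

context main_ctx
begin

abbreviation (input) "ee k \<equiv> (grp_elt k :: 'a \<Rightarrow> 'k)"

definition N where "N = {k \<in> carrier G. grp_elt k \<ominus>\<^bsub>grp_alg G\<^esub> \<one>\<^bsub>grp_alg G\<^esub> \<in> P'}"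

lemma ee_closed: "k \<in> carrier G \<Longrightarrow> ee k \<in> carrier (grp_alg G)" by (rule elt_closed[OF G.is_group])
lemma ee_mult: "k \<in> carrier G \<Longrightarrow> k' \<in> carrier G \<Longrightarrow> ee (k \<otimes> k') = ee k \<otimes>\<^bsub>grp_alg G\<^esub> ee k'"
  by (rule elt_mult[OF G.is_group, symmetric])
lemma ee_one: "ee \<one> = \<one>\<^bsub>grp_alg G\<^esub>" by (simp add: ga_one)

lemma N_normal: "N \<lhd> G"
proof -
  have subg: "subgroup N G"
  proof (rule G.subgroupI)
    show "N \<subseteq> carrier G" by (auto simp: N_def)
    have "ee \<one> \<ominus>\<^bsub>grp_alg G\<^esub> \<one>\<^bsub>grp_alg G\<^esub> = \<zero>\<^bsub>grp_alg G\<^esub>" by (simp add: ee_one a_minus_def R.r_neg)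
    hence "\<one> \<in> N" by (simp add: N_def P'_I IG.Izero)
    thus "N \<noteq> {}" by blast
  next
    fix k assume k: "k \<in> N"
    hence kc: "k \<in> carrier G" and kP: "ee k \<ominus>\<^bsub>grp_alg G\<^esub> \<one>\<^bsub>grp_alg G\<^esub> \<in> P'" by (auto simp: N_def)
    have "ee (inv k) \<otimes>\<^bsub>grp_alg G\<^esub> ee k = \<one>\<^bsub>grp_alg G\<^esub>" using kc by (simp add: ee_mult[symmetric] ee_one)
    hence "ee (inv k) \<ominus>\<^bsub>grp_alg G\<^esub> \<one>\<^bsub>grp_alg G\<^esub> = \<ominus>\<^bsub>grp_alg G\<^esub> (ee (inv k) \<otimes>\<^bsub>grp_alg G\<^esub> (ee k \<ominus>\<^bsub>grp_alg G\<^esub> \<one>\<^bsub>grp_alg G\<^esub>))"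
      using R.id_inv1[OF ee_closed[OF kc] ee_closed[OF G.inv_closed[OF kc]]] by simp
    also have "\<dots> \<in> P'" using kP kc by (intro P'_neg P'_lmult ee_closed) auto
    finally show "inv k \<in> N" using kc by (simp add: N_def)
  next
    fix k k' assume k: "k \<in> N" and k': "k' \<in> N"
    hence kc: "k \<in> carrier G" "k' \<in> carrier G" and kP: "ee k \<ominus>\<^bsub>grp_alg G\<^esub> \<one>\<^bsub>grp_alg G\<^esub> \<in> P'" "ee k' \<ominus>\<^bsub>grp_alg G\<^esub> \<one>\<^bsub>grp_alg G\<^esub> \<in> P'"
      by (auto simp: N_def)
    have "ee (k \<otimes> k') \<ominus>\<^bsub>grp_alg G\<^esub> \<one>\<^bsub>grp_alg G\<^esub> = ee k \<otimes>\<^bsub>grp_alg G\<^esub> (ee k' \<ominus>\<^bsub>grp_alg G\<^esub> \<one>\<^bsub>grp_alg G\<^esub>) \<oplus>\<^bsub>grp_alg G\<^esub> (ee k \<ominus>\<^bsub>grp_alg G\<^esub> \<one>\<^bsub>grp_alg G\<^esub>)"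
      using kc by (simp add: ee_mult R.id_mult ee_closed)
    also have "\<dots> \<in> P'" using kP kc by (intro P'_add P'_lmult ee_closed) auto
    finally show "k \<otimes> k' \<in> N" using kc by (simp add: N_def)
  qed
  have "x \<otimes> k \<otimes> inv x \<in> N" if x: "x \<in> carrier G" and k: "k \<in> N" for x k
  proof -
    have kc: "k \<in> carrier G" and kP: "ee k \<ominus>\<^bsub>grp_alg G\<^esub> \<one>\<^bsub>grp_alg G\<^esub> \<in> P'" using k by (auto simp: N_def)
    have "ee x \<otimes>\<^bsub>grp_alg G\<^esub> ee (inv x) = \<one>\<^bsub>grp_alg G\<^esub>" using x by (simp add: ee_mult[symmetric] ee_one)
    hence "ee (x \<otimes> k \<otimes> inv x) \<ominus>\<^bsub>grp_alg G\<^esub> \<one>\<^bsub>grp_alg G\<^esub> = ee x \<otimes>\<^bsub>grp_alg G\<^esub> (ee k \<ominus>\<^bsub>grp_alg G\<^esub> \<one>\<^bsub>grp_alg G\<^esub>) \<otimes>\<^bsub>grp_alg G\<^esub> ee (inv x)"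
      using x kc by (simp add: ee_mult R.id_conj ee_closed)
    also have "\<dots> \<in> P'" using kP kc x by (intro P'_rmult P'_lmult ee_closed) auto
    finally show ?thesis using x kc by (simp add: N_def)
  qed
  thus ?thesis using subg G.normal_inv_iff by blast
qed

lemma ker_N: "kernel G H h \<subseteq> N"
proof -
  have "L \<subseteq> N" using Lker P'_L by (auto simp: N_def kernel_def)
  hence "normal_closure G L \<subseteq> N" unfolding normal_closure_def using N_normal by blast
  thus ?thesis using ncl by simp
qed

lemma map_zero: "grp_alg_map h H (\<zero>\<^bsub>grp_alg G\<^esub> :: 'a \<Rightarrow> 'k) = \<zero>\<^bsub>grp_alg H\<^esub>"
  by (rule ext) (simp add: grp_alg_map_def ga_zero fsupp_def)

lemma ker_P':
  assumes "x \<in> carrier (grp_alg G :: ('a \<Rightarrow> 'k) ring)" and "grp_alg_map h H x = \<zero>\<^bsub>grp_alg H\<^esub>"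
  shows "x \<in> P'"
  using assms
proof (induction "card (fsupp x)" arbitrary: x rule: less_induct)
  case less
  have xc: "x \<in> carrier (grp_alg G)" and mx: "grp_alg_map h H x = \<zero>\<^bsub>grp_alg H\<^esub>" by fact+
  have fx: "finite (fsupp x)" "fsupp x \<subseteq> carrier G" using xc by (auto simp: ga_carrier)
  show ?case
  proof (cases "fsupp x = {}")
    case True
    hence "x = \<zero>\<^bsub>grp_alg G\<^esub>" by (auto simp: fsupp_def ga_zero)
    thus ?thesis by (simp add: P'_I IG.Izero)
  next
    case False
    then obtain g0 where g0: "g0 \<in> fsupp x" by blast
    have g0c: "g0 \<in> carrier G" using g0 fx by auto
    define c where "c = x g0"
    have c0: "c \<noteq> 0" using g0 by (simp add: fsupp_def c_def)
    have sum0: "(\<Sum>g\<in>{g\<in>fsupp x. h g = h g0}. x g) = 0"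
    proof -
      have "grp_alg_map h H x (h g0) = 0" using mx by (simp add: ga_zero)
      thus ?thesis using g0c by (simp add: grp_alg_map_def)
    qed
    obtain g1 where g1: "g1 \<in> fsupp x" "g1 \<noteq> g0" "h g1 = h g0"
    proof -
      have "{g\<in>fsupp x. h g = h g0} \<noteq> {g0}"
      proof
        assume "{g\<in>fsupp x. h g = h g0} = {g0}"
        hence "(\<Sum>g\<in>{g\<in>fsupp x. h g = h g0}. x g) = x g0" by simp
        thus False using sum0 c0 c_def by simp
      qed
      moreover have "g0 \<in> {g\<in>fsupp x. h g = h g0}" using g0 by simp
      ultimately obtain g1 where "g1 \<in> {g\<in>fsupp x. h g = h g0}" "g1 \<noteq> g0" by blast
      thus ?thesis using that by blast
    qed
    have g1c: "g1 \<in> carrier G" using g1 fx by auto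
    define d where "d = sc c (ee g0 \<ominus>\<^bsub>grp_alg G\<^esub> ee g1)"
    have dc: "d \<in> carrier (grp_alg G)" unfolding d_def by (intro sc_closed[OF G.is_group] R.minus_closed ee_closed g0c g1c)
    define x' where "x' = x \<ominus>\<^bsub>grp_alg G\<^esub> d"
    have x'c: "x' \<in> carrier (grp_alg G)" unfolding x'_def using xc dc by simp
    have x'_apply: "x' g = x g - c * (ee g0 g - ee g1 g)" for g
    proof -
      have "x' g = x g - d g" by (simp add: x'_def ga_minus[OF G.is_group xc dc])
      moreover have "d g = c * (ee g0 g - ee g1 g)"
        by (simp add: d_def sc_apply ga_minus[OF G.is_group ee_closed[OF g0c] ee_closed[OF g1c]])
      ultimately show ?thesis by simp
    qed
    have sub: "fsupp x' \<subseteq> fsupp x - {g0}"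
    proof
      fix g assume g: "g \<in> fsupp x'"
      hence nz: "x' g \<noteq> 0" by (simp add: fsupp_def)
      have "g \<noteq> g0"
      proof
        assume "g = g0"
        hence "x' g = x g0 - c * (1 - 0)" using g1(2) by (simp add: x'_apply grp_elt_def)
        thus False using nz c_def by simp
      qed
      moreover have "g \<in> fsupp x"
      proof (rule ccontr)
        assume ng: "g \<notin> fsupp x"
        hence "g \<noteq> g1" using g1(1) by blast
        hence "x' g = 0" using ng \<open>g \<noteq> g0\<close> by (simp add: x'_apply grp_elt_def fsupp_def)
        thus False using nz by simp
      qed
      ultimately show "g \<in> fsupp x - {g0}" by blast
    qed
    have "fsupp x' \<subset> fsupp x" using sub g0 by blast
    hence lt: "card (fsupp x') < card (fsupp x)" by (rule psubset_card_mono[OF fx(1)])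
    have "grp_alg_map h H d = \<zero>\<^bsub>grp_alg H\<^esub>"
    proof -
      have "grp_alg_map h H (ee g0 \<ominus>\<^bsub>grp_alg G\<^esub> ee g1) = grp_elt (h g0) \<ominus>\<^bsub>grp_alg H\<^esub> grp_elt (h g1)"
        by (simp add: map_minus ee_closed g0c g1c map_elt)
      also have "\<dots> = \<zero>\<^bsub>grp_alg H\<^esub>"
      proof -
        have eh: "(grp_elt (h g0) :: 'c \<Rightarrow> 'k) \<in> carrier (grp_alg H)" by (rule elt_closed[OF H.is_group hom_closed[OF g0c]])
        show ?thesis using g1(3) RH.r_neg[OF eh] by (simp add: a_minus_def)
      qed
      finally show ?thesis unfolding d_def
        by (simp add: map_sc R.minus_closed ee_closed g0c g1c) (rule ext, simp add: sc_apply ga_zero)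
    qed
    hence "grp_alg_map h H x' = \<zero>\<^bsub>grp_alg H\<^esub> \<ominus>\<^bsub>grp_alg H\<^esub> \<zero>\<^bsub>grp_alg H\<^esub>"
      unfolding x'_def by (simp only: map_minus[OF xc dc] mx)
    hence "grp_alg_map h H x' = \<zero>\<^bsub>grp_alg H\<^esub>" by (simp add: a_minus_def)
    hence x'P: "x' \<in> P'" using less.hyps[OF lt x'c] by simp
    have dP: "d \<in> P'"
    proof -
      let ?k = "inv g1 \<otimes> g0"
      have kc: "?k \<in> carrier G" using g0c g1c by simp
      have "h ?k = \<one>\<^bsub>H\<^esub>" using g0c g1c g1(3) by simp
      hence "?k \<in> N" using ker_N kc by (auto simp: kernel_def)
      hence kP: "ee ?k \<ominus>\<^bsub>grp_alg G\<^esub> \<one>\<^bsub>grp_alg G\<^esub> \<in> P'" by (simp add: N_def)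
      have "ee g1 \<otimes>\<^bsub>grp_alg G\<^esub> (ee ?k \<ominus>\<^bsub>grp_alg G\<^esub> \<one>\<^bsub>grp_alg G\<^esub>) = ee g0 \<ominus>\<^bsub>grp_alg G\<^esub> ee g1"
      proof -
        have "ee g1 \<otimes>\<^bsub>grp_alg G\<^esub> ee ?k = ee g0"
          using g0c g1c by (simp add: ee_mult[symmetric] G.m_assoc[symmetric])
        thus ?thesis using R.id_lmd[OF ee_closed[OF g1c] ee_closed[OF kc]] by simp
      qed
      hence "ee g0 \<ominus>\<^bsub>grp_alg G\<^esub> ee g1 \<in> P'" using P'_lmult[OF kP ee_closed[OF g1c]] by simp
      hence "sc c \<one>\<^bsub>grp_alg G\<^esub> \<otimes>\<^bsub>grp_alg G\<^esub> (ee g0 \<ominus>\<^bsub>grp_alg G\<^esub> ee g1) \<in> P'"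
        by (rule P'_lmult) (rule sc_closed[OF G.is_group R.one_closed])
      thus ?thesis unfolding d_def
        by (subst sc_mult[OF G.is_group]) (simp_all add: ee_closed g0c g1c)
    qed
    have "x = x' \<oplus>\<^bsub>grp_alg G\<^esub> d" unfolding x'_def using R.id_addback[OF xc dc] by simp
    thus ?thesis using P'_add[OF x'P dP] by simp
  qed
qed

end

context main_ctx
begin

definition T where "T = {z \<in> carrier (grp_alg H :: ('c \<Rightarrow> 'k) ring). \<forall>x\<in>carrier (grp_alg G :: ('a \<Rightarrow> 'k) ring).
   grp_alg_map h H x = z \<longrightarrow> x \<in> P'}"

lemma T_intro:
  assumes x0: "x0 \<in> P'" shows "grp_alg_map h H x0 \<in> T"
proof -
  have x0c: "x0 \<in> carrier (grp_alg G)" by (rule P'_carr[OF x0])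
  have "x \<in> P'" if x: "x \<in> carrier (grp_alg G)" and e: "grp_alg_map h H x = grp_alg_map h H x0" for x
  proof -
    have "grp_alg_map h H (x \<ominus>\<^bsub>grp_alg G\<^esub> x0) = grp_alg_map h H x0 \<ominus>\<^bsub>grp_alg H\<^esub> grp_alg_map h H x0"
      by (simp only: map_minus[OF x x0c] e)
    also have "\<dots> = \<zero>\<^bsub>grp_alg H\<^esub>" using RH.r_neg[OF map_closed[OF x0c]] by (simp add: a_minus_def)
    finally have "x \<ominus>\<^bsub>grp_alg G\<^esub> x0 \<in> P'" by (rule ker_P'[rotated]) (use x x0c in simp)
    hence "(x \<ominus>\<^bsub>grp_alg G\<^esub> x0) \<oplus>\<^bsub>grp_alg G\<^esub> x0 \<in> P'" using P'_add x0 by blast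
    thus ?thesis using R.id_addback[OF x x0c] by simp
  qed
  thus ?thesis using map_closed[OF x0c] by (auto simp: T_def)
qed

lemma T_elim:
  assumes z: "z \<in> T" shows "\<exists>x\<in>P'. grp_alg_map h H x = z"
proof -
  have zc: "z \<in> carrier (grp_alg H)" using z by (simp add: T_def)
  obtain x where x: "x \<in> carrier (grp_alg G :: ('a \<Rightarrow> 'k) ring)" "grp_alg_map h H x = z" using map_surj[OF surj zc] by blast
  thus ?thesis using z by (auto simp: T_def)
qed

lemma lift: assumes "z \<in> carrier (grp_alg H :: ('c \<Rightarrow> 'k) ring)"
  shows "\<exists>x\<in>carrier (grp_alg G :: ('a \<Rightarrow> 'k) ring). grp_alg_map h H x = z"
  by (rule map_surj[OF surj assms])

lemma T_ideal: "ideal T (grp_alg H)"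
proof (rule RH.idealI')
  show "T \<subseteq> carrier (grp_alg H)" by (auto simp: T_def)
  show "\<zero>\<^bsub>grp_alg H\<^esub> \<in> T" using T_intro[OF P'_I[OF IG.Izero]] map_zero by simp
next
  fix a b :: "'c \<Rightarrow> 'k" assume a: "a \<in> T" and b: "b \<in> T"
  obtain x where x: "x \<in> P'" "grp_alg_map h H x = a" using T_elim[OF a] by blast
  obtain y where y: "y \<in> P'" "grp_alg_map h H y = b" using T_elim[OF b] by blast
  show "a \<oplus>\<^bsub>grp_alg H\<^esub> b \<in> T" using T_intro[OF P'_add[OF x(1) y(1)]] map_add[OF P'_carr[OF x(1)] P'_carr[OF y(1)]] x y by simp
next
  fix a :: "'c \<Rightarrow> 'k" assume a: "a \<in> T"
  obtain x where x: "x \<in> P'" "grp_alg_map h H x = a" using T_elim[OF a] by blast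
  show "\<ominus>\<^bsub>grp_alg H\<^esub> a \<in> T" using T_intro[OF P'_neg[OF x(1)]] map_neg[OF P'_carr[OF x(1)]] x by simp
next
  fix a c :: "'c \<Rightarrow> 'k" assume a: "a \<in> T" and c: "c \<in> carrier (grp_alg H)"
  obtain x where x: "x \<in> P'" "grp_alg_map h H x = a" using T_elim[OF a] by blast
  obtain y where y: "y \<in> carrier (grp_alg G)" "grp_alg_map h H y = c" using lift[OF c] by blast
  show "c \<otimes>\<^bsub>grp_alg H\<^esub> a \<in> T" using T_intro[OF P'_lmult[OF x(1) y(1)]] map_mult[OF y(1) P'_carr[OF x(1)]] x y by simp
  show "a \<otimes>\<^bsub>grp_alg H\<^esub> c \<in> T" using T_intro[OF P'_rmult[OF x(1) y(1)]] map_mult[OF P'_carr[OF x(1)] y(1)] x y by simp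
qed

lemma IH_T: "comm_ideal H \<subseteq> T"
  unfolding comm_ideal_def
proof (rule RH.genideal_minimal[OF T_ideal], clarify)
  fix a b :: "'c \<Rightarrow> 'k" assume a: "a \<in> carrier (grp_alg H)" and b: "b \<in> carrier (grp_alg H)" and bs: "grp_star H b = b"
  obtain x where x: "x \<in> carrier (grp_alg G)" "grp_alg_map h H x = a" using lift[OF a] by blast
  obtain y where y: "y \<in> carrier (grp_alg G)" "grp_alg_map h H y = b" using lift[OF b] by blast
  define y' where "y' = gsym G y"
  have y'c: "y' \<in> carrier (grp_alg G)" unfolding y'_def by (rule gsym_closed[OF G.is_group y(1)])
  have y's: "grp_star G y' = y'" unfolding y'_def by (rule star_gsym[OF G.is_group y(1)])
  have my': "grp_alg_map h H y' = b" unfolding y'_def using map_gsym[OF y(1)] y(2) gsym_fix[OF H.is_group b bs] by simp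
  have "x \<otimes>\<^bsub>grp_alg G\<^esub> y' \<ominus>\<^bsub>grp_alg G\<^esub> y' \<otimes>\<^bsub>grp_alg G\<^esub> x \<in> comm_ideal G" by (rule gen_I[OF G.is_group x(1) y'c y's])
  hence "grp_alg_map h H (x \<otimes>\<^bsub>grp_alg G\<^esub> y' \<ominus>\<^bsub>grp_alg G\<^esub> y' \<otimes>\<^bsub>grp_alg G\<^esub> x) \<in> T" by (rule T_intro[OF P'_I])
  thus "a \<otimes>\<^bsub>grp_alg H\<^esub> b \<ominus>\<^bsub>grp_alg H\<^esub> b \<otimes>\<^bsub>grp_alg H\<^esub> a \<in> T"
    by (simp add: map_minus map_mult x y'c my')
qed

lemma ker_J: "sharp_kernel h G H \<subseteq> J"
proof
  fix U :: "('a \<Rightarrow> 'k) set" assume U: "U \<in> sharp_kernel h G H"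
  obtain x where x: "x \<in> carrier (grp_alg G)" "U = A_cls G x" "grp_star G x = x" "grp_alg_map h H x \<in> comm_ideal H"
    using kerD[OF U] by blast
  have "grp_alg_map h H x \<in> T" using x(4) IH_T by blast
  hence "x \<in> P'" using x(1) by (auto simp: T_def)
  hence "x \<in> P" by (rule P'_P)
  hence "A_cls G (gsym G x) \<in> J" by (simp add: P_def)
  thus "U \<in> J" using gsym_fix[OF G.is_group x(1) x(3)] x(2) by simp
qed

end

theorem mainTheorem3:
  fixes G :: "('g, 'm) monoid_scheme" and H :: "('h, 'n) monoid_scheme"
    and f :: "'g \<Rightarrow> 'h" and L :: "'g set"
  assumes "group G" and "group H"
    and "f \<in> hom G H" and "f ` carrier G = carrier H"
    and "L \<subseteq> kernel G H f"
    and "normal_closure G L = kernel G H f"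
  shows "(sharp_kernel f G H :: ('g \<Rightarrow> 'k::field_char_0) set set) = sharp_ideal G L"
proof
  have gh: "group_hom G H f" using assms by (simp add: group_hom_def group_hom_axioms_def)
  show "sharp_ideal G L \<subseteq> (sharp_kernel f G H :: ('g \<Rightarrow> 'k::field_char_0) set set)"
    by (rule group_hom.sharp_ideal_sub[OF gh assms(5)])
  show "(sharp_kernel f G H :: ('g \<Rightarrow> 'k::field_char_0) set set) \<subseteq> sharp_ideal G L"
  proof
    fix U assume U: "U \<in> (sharp_kernel f G H :: ('g \<Rightarrow> 'k::field_char_0) set set)"
    show "U \<in> sharp_ideal G L"
      unfolding sharp_ideal_def genideal_def
    proof (rule InterI, clarify)
      fix J :: "('g \<Rightarrow> 'k) set set"
      assume J: "ideal J (sharp_ring G)"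
        and SJ: "{A_bar G (U \<otimes>\<^bsub>A_alg G\<^esub> A_cls G (grp_elt l)) \<ominus>\<^bsub>A_alg G\<^esub> A_bar G U | U l.
        U \<in> carrier (A_alg G) \<and> l \<in> L} \<subseteq> J"
      interpret M: main_ctx G H f L J
        by (rule main_ctx.intro[OF gh]) (rule main_ctx_axioms.intro; fact assms J SJ)
      show "U \<in> J" using M.ker_J U by blast
    qed
  qed
qed


end
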